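(* Let $G$ be a connected graph that is not a path, not a cycle, and not the claw graph $K_{1,3}$. Then $L^n(G)$ is not representable for every integer $n \geqslant 4$.
   Context: All graphs are finite and simple. For a word $W$ over an alphabet, two distinct letters $x,y$ alternate in $W$ if both occur in $W$ and, after erasing all other letters from $W$, one obtains a word of the form $xyxy\ldots$ or $yxyx\ldots$ (an alternating word of any length). A graph $G=(V,E)$ is representable if there exists a word $W$ over the alphabet $V$ in which every vertex occurs, such that for all distinct $x,y\in V$, the letters $x$ and $y$ alternate in $W$ if and only if $(x,y)\in E$. The line graph $L(G)$ of a graph $G$ has the edges of $G$ as vertices, two of them being adjacent in $L(G)$ iff they share an endpoint in $G$. $L^n(G)$ denotes the graph obtained from $G$ by applying the line graph operation $n$ times. *)

theory Defs
  imports Main "HOL-Library.FSet"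
begin

type_synonym 'v graph = "'v set \<times> 'v set set"

definition simple_graph :: "'v graph \<Rightarrow> bool" where
  "simple_graph G \<longleftrightarrow> finite (fst G) \<and>
     (\<forall>e\<in>snd G. \<exists>x y. x \<in> fst G \<and> y \<in> fst G \<and> x \<noteq> y \<and> e = {x, y})"

inductive reach :: "'v graph \<Rightarrow> 'v \<Rightarrow> 'v \<Rightarrow> bool" for G where
  refl: "x \<in> fst G \<Longrightarrow> reach G x x"
| step: "reach G x y \<Longrightarrow> {y, z} \<in> snd G \<Longrightarrow> reach G x z"

definition connected_graph :: "'v graph \<Rightarrow> bool" where
  "connected_graph G \<longleftrightarrow> fst G \<noteq> {} \<and> (\<forall>x\<in>fst G. \<forall>y\<in>fst G. reach G x y)"

definition is_path_graph :: "'v graph \<Rightarrow> bool" where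
  "is_path_graph G \<longleftrightarrow> (\<exists>n f. n \<ge> 1 \<and> bij_betw f {0..<n} (fst G) \<and>
      snd G = {{f i, f (Suc i)} | i. Suc i < n})"

definition is_cycle_graph :: "'v graph \<Rightarrow> bool" where
  "is_cycle_graph G \<longleftrightarrow> (\<exists>n f. n \<ge> 3 \<and> bij_betw f {0..<n} (fst G) \<and>
      snd G = {{f i, f ((Suc i) mod n)} | i. i < n})"

definition is_claw :: "'v graph \<Rightarrow> bool" where
  "is_claw G \<longleftrightarrow> (\<exists>c a b d. distinct [c, a, b, d] \<and> fst G = {c, a, b, d} \<and>
      snd G = {{c, a}, {c, b}, {c, d}})"

definition alternate :: "'v list \<Rightarrow> 'v \<Rightarrow> 'v \<Rightarrow> bool" where
  "alternate W x y \<longleftrightarrow> x \<in> set W \<and> y \<in> set W \<and>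
     (let w = filter (\<lambda>z. z = x \<or> z = y) W in
        \<forall>i. Suc i < length w \<longrightarrow> w ! i \<noteq> w ! Suc i)"

definition representable :: "'v graph \<Rightarrow> bool" where
  "representable G \<longleftrightarrow> (\<exists>W. set W = fst G \<and>
     (\<forall>x\<in>fst G. \<forall>y\<in>fst G. x \<noteq> y \<longrightarrow> (alternate W x y \<longleftrightarrow> {x, y} \<in> snd G)))"

text \<open>To iterate the line graph operation within one type, vertices live in a
universe: original vertices are Leaf v, and an edge e (a finite 2-set) of a
graph becomes the vertex Node e of its line graph.\<close>
datatype 'a gv = Leaf 'a | Node "'a gv fset"

definition line_graph :: "'a gv graph \<Rightarrow> 'a gv graph" where
  "line_graph G = ((\<lambda>e. Node (Abs_fset e)) ` snd G,
     {{Node (Abs_fset e), Node (Abs_fset f)} | e f.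
        e \<in> snd G \<and> f \<in> snd G \<and> e \<noteq> f \<and> e \<inter> f \<noteq> {}})"

definition embed_graph :: "'a graph \<Rightarrow> 'a gv graph" where
  "embed_graph G = (Leaf ` fst G, (\<lambda>e. Leaf ` e) ` snd G)"

definition iter_line_graph :: "nat \<Rightarrow> 'a graph \<Rightarrow> 'a gv graph" where
  "iter_line_graph n G = (line_graph ^^ n) (embed_graph G)"

end

theory Submission
  imports Defs
begin

definition cnt :: "'v list \<Rightarrow> 'v \<Rightarrow> int" where
  "cnt u x = int (length (filter (\<lambda>z. z = x) u))"

definition lead :: "'v list \<Rightarrow> 'v \<Rightarrow> 'v \<Rightarrow> bool" where
  "lead W x y \<longleftrightarrow> (\<forall>i. 0 \<le> cnt (take i W) x - cnt (take i W) y \<and> cnt (take i W) x - cnt (take i W) y \<le> 1)"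

lemma cnt_append[simp]: "cnt (u @ v) x = cnt u x + cnt v x"
  by (simp add: cnt_def)

lemma cnt_filter: "P x \<Longrightarrow> cnt (filter P u) x = cnt u x"
  unfolding cnt_def by (simp add: filter_filter) (metis (mono_tags, lifting) filter_cong)

lemma filter_take_prefix:
  "filter P (take i W) = take (length (filter P (take i W))) (filter P W)"
proof -
  have "filter P W = filter P (take i W) @ filter P (drop i W)"
    by (metis append_take_drop_id filter_append)
  then show ?thesis by (metis append_eq_conv_conj)
qed

lemma filter_take_ex: "\<exists>i. filter P (take i W) = take j (filter P W)"
proof (induction W arbitrary: j)
  case Nil then show ?case by simp
next
  case (Cons v W)
  show ?case
  proof (cases j)
    case 0 then show ?thesis by (intro exI[of _ 0]) simp
  next
    case (Suc j')
    show ?thesis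
    proof (cases "P v")
      case True
      obtain i where "filter P (take i W) = take j' (filter P W)" using Cons.IH by blast
      then show ?thesis using True Suc by (intro exI[of _ "Suc i"]) simp
    next
      case False
      obtain i where "filter P (take i W) = take j (filter P W)" using Cons.IH by blast
      then show ?thesis using False by (intro exI[of _ "Suc i"]) simp
    qed
  qed
qed

lemma lead_filter_to:
  assumes "P x" "P y" "lead (filter P W) x y" shows "lead W x y"
  unfolding lead_def
proof
  fix i
  let ?j = "length (filter P (take i W))"
  have e: "filter P (take i W) = take ?j (filter P W)" by (rule filter_take_prefix)
  have "cnt (take i W) x = cnt (take ?j (filter P W)) x"
    using cnt_filter[of P x "take i W"] assms(1) e by simp
  moreover have "cnt (take i W) y = cnt (take ?j (filter P W)) y"
    using cnt_filter[of P y "take i W"] assms(2) e by simp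
  ultimately show "0 \<le> cnt (take i W) x - cnt (take i W) y \<and> cnt (take i W) x - cnt (take i W) y \<le> 1"
    using assms(3) unfolding lead_def by metis
qed

lemma lead_filter_from:
  assumes "P x" "P y" "lead W x y" shows "lead (filter P W) x y"
  unfolding lead_def
proof
  fix j
  obtain i where e: "filter P (take i W) = take j (filter P W)" using filter_take_ex by blast
  have "cnt (take j (filter P W)) x = cnt (take i W) x"
    using cnt_filter[of P x "take i W"] assms(1) e by simp
  moreover have "cnt (take j (filter P W)) y = cnt (take i W) y"
    using cnt_filter[of P y "take i W"] assms(2) e by simp
  ultimately show "0 \<le> cnt (take j (filter P W)) x - cnt (take j (filter P W)) y \<and>
      cnt (take j (filter P W)) x - cnt (take j (filter P W)) y \<le> 1"
    using assms(3) unfolding lead_def by metis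
qed

lemma noadj_nth:
  assumes "set w \<subseteq> {x, y}" "x \<noteq> y" "\<forall>i. Suc i < length w \<longrightarrow> w ! i \<noteq> w ! Suc i"
    "w \<noteq> []" "w ! 0 = x"
  shows "j < length w \<Longrightarrow> w ! j = (if even j then x else y)"
proof (induction j)
  case 0 then show ?case using assms by simp
next
  case (Suc j)
  have "w ! Suc j \<in> {x, y}" using assms(1) Suc.prems nth_mem by blast
  moreover have "w ! Suc j \<noteq> w ! j" using assms(3) Suc.prems by metis
  ultimately show ?case using Suc by auto
qed

lemma noadj_lead:
  assumes "set w \<subseteq> {x, y}" "x \<noteq> y" "\<forall>i. Suc i < length w \<longrightarrow> w ! i \<noteq> w ! Suc i"
    "w \<noteq> []" "w ! 0 = x"
  shows "lead w x y"
proof -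
  have key: "j \<le> length w \<Longrightarrow> cnt (take j w) x - cnt (take j w) y = (if even j then 0 else 1)" for j
  proof (induction j)
    case 0 then show ?case by (simp add: cnt_def)
  next
    case (Suc j)
    then have jl: "j < length w" by simp
    have "take (Suc j) w = take j w @ [w ! j]" using jl by (simp add: take_Suc_conv_app_nth)
    moreover have "w ! j = (if even j then x else y)" using noadj_nth[OF assms] jl by blast
    ultimately show ?case using Suc assms(2) by (auto simp: cnt_def)
  qed
  show ?thesis unfolding lead_def
  proof
    fix i
    define m where "m = min i (length w)"
    have tm: "take i w = take m w" by (simp add: m_def min_def)
    have "m \<le> length w" by (simp add: m_def)
    then show "0 \<le> cnt (take i w) x - cnt (take i w) y \<and> cnt (take i w) x - cnt (take i w) y \<le> 1"
      unfolding tm using key[of m] by (auto split: if_splits)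
  qed
qed

lemma lead_noadj:
  assumes "set w \<subseteq> {x, y}" "x \<noteq> y" "lead w x y"
  shows "\<forall>i. Suc i < length w \<longrightarrow> w ! i \<noteq> w ! Suc i"
proof (intro allI impI notI)
  fix i assume l: "Suc i < length w" and eq: "w ! i = w ! Suc i"
  define v where "v = w ! i"
  have v2: "w ! Suc i = v" using eq v_def by simp
  have t: "take (Suc (Suc i)) w = take i w @ [v, v]"
    using l v2 unfolding v_def by (simp add: take_Suc_conv_app_nth)
  have "i < length w" using l by simp
  then have "v \<in> set w" unfolding v_def by simp
  then have vin: "v \<in> {x, y}" using assms(1) by blast
  define D0 where "D0 = cnt (take i w) x - cnt (take i w) y"
  define D2 where "D2 = cnt (take (Suc (Suc i)) w) x - cnt (take (Suc (Suc i)) w) y"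
  have "D2 = D0 + (if v = x then 2 else 0) - (if v = y then 2 else 0)"
    unfolding D2_def D0_def t by (simp add: cnt_def)
  moreover have "0 \<le> D0 \<and> D0 \<le> 1" "0 \<le> D2 \<and> D2 \<le> 1"
    using assms(3) unfolding lead_def D0_def D2_def by blast+
  ultimately show False using vin assms(2) by (cases "v = x") auto
qed

lemma alt_lead:
  assumes "alternate W x y" "x \<noteq> y"
  shows "lead W x y \<or> lead W y x"
proof -
  define w where "w = filter (\<lambda>z. z = x \<or> z = y) W"
  have na: "\<forall>i. Suc i < length w \<longrightarrow> w ! i \<noteq> w ! Suc i" and xin: "x \<in> set W"
    using assms(1) unfolding alternate_def Let_def w_def by auto
  have ne: "w \<noteq> []" using xin unfolding w_def by (auto simp: filter_empty_conv)
  have sw: "set w \<subseteq> {x, y}" unfolding w_def by auto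
  have sw': "set w \<subseteq> {y, x}" unfolding w_def by auto
  have "w ! 0 \<in> set w" using ne by (intro nth_mem) simp
  then have "w ! 0 = x \<or> w ! 0 = y" using sw by blast
  then show ?thesis
  proof
    assume "w ! 0 = x"
    then have "lead w x y" by (rule noadj_lead[OF sw assms(2) na ne])
    then have "lead W x y" unfolding w_def by (rule lead_filter_to[rotated 2]) simp_all
    then show ?thesis ..
  next
    assume h: "w ! 0 = y"
    have yx: "y \<noteq> x" using assms(2) by simp
    have "lead w y x" using h by (rule noadj_lead[OF sw' yx na ne])
    then have "lead W y x" unfolding w_def by (rule lead_filter_to[rotated 2]) simp_all
    then show ?thesis ..
  qed
qed

lemma lead_alt:
  assumes "lead W x y" "x \<noteq> y" "x \<in> set W" "y \<in> set W"
  shows "alternate W x y"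
proof -
  define w where "w = filter (\<lambda>z. z = x \<or> z = y) W"
  have "lead w x y" unfolding w_def by (rule lead_filter_from[rotated 2]) (use assms(1) in simp_all)
  moreover have sw: "set w \<subseteq> {x, y}" unfolding w_def by auto
  ultimately have "\<forall>i. Suc i < length w \<longrightarrow> w ! i \<noteq> w ! Suc i"
    using lead_noadj[OF sw assms(2)] by blast
  then show ?thesis using assms(3,4) unfolding alternate_def Let_def w_def by simp
qed

lemma cnt_differ: "x \<noteq> z \<Longrightarrow> x \<in> set W \<Longrightarrow> \<exists>i. cnt (take i W) x \<noteq> cnt (take i W) z"
proof (induction W)
  case Nil then show ?case by simp
next
  case (Cons v W)
  show ?case
  proof (cases "v = x \<or> v = z")
    case True
    then show ?thesis using Cons.prems by (intro exI[of _ 1]) (auto simp: cnt_def)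
  next
    case False
    then have "x \<in> set W" using Cons.prems by auto
    then obtain i where "cnt (take i W) x \<noteq> cnt (take i W) z" using Cons by blast
    then show ?thesis using False by (intro exI[of _ "Suc i"]) (auto simp: cnt_def)
  qed
qed

lemma leadD: "lead W x y \<Longrightarrow> 0 \<le> cnt (take i W) x - cnt (take i W) y \<and> cnt (take i W) x - cnt (take i W) y \<le> 1"
  unfolding lead_def by blast

lemma ar_tri: "(0::int) \<le> X - Y \<Longrightarrow> 0 \<le> Y - Z \<Longrightarrow> 0 \<le> Z - X \<Longrightarrow> X = Z"
  by linarith
lemma ar_anti: "(0::int) \<le> X - Y \<Longrightarrow> 0 \<le> Y - X \<Longrightarrow> X = Y"
  by linarith
lemma ar_sc1: "(0::int) \<le> X - Y \<Longrightarrow> 0 \<le> Y - Z \<Longrightarrow> 0 \<le> Z - U \<Longrightarrow> X - U \<le> 1 \<Longrightarrow> 0 \<le> X - Z \<and> X - Z \<le> 1"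
  by linarith
lemma ar_sc2: "(0::int) \<le> X - Y \<Longrightarrow> 0 \<le> Y - Z \<Longrightarrow> 0 \<le> Z - U \<Longrightarrow> X - U \<le> 1 \<Longrightarrow> 0 \<le> Y - U \<and> Y - U \<le> 1"
  by linarith

lemma lead_tri:
  assumes "x \<noteq> z" "x \<in> set W" "lead W x y" "lead W y z" "lead W z x" shows False
proof -
  from cnt_differ[OF assms(1,2)] obtain i where ne: "cnt (take i W) x \<noteq> cnt (take i W) z" ..
  have "cnt (take i W) x = cnt (take i W) z"
    by (rule ar_tri[OF conjunct1[OF leadD[OF assms(3)]] conjunct1[OF leadD[OF assms(4)]] conjunct1[OF leadD[OF assms(5)]]])
  then show False using ne by (rule notE[rotated])
qed

lemma lead_anti:
  assumes "x \<noteq> y" "x \<in> set W" "lead W x y" "lead W y x" shows False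
proof -
  from cnt_differ[OF assms(1,2)] obtain i where ne: "cnt (take i W) x \<noteq> cnt (take i W) y" ..
  have "cnt (take i W) x = cnt (take i W) y"
    by (rule ar_anti[OF conjunct1[OF leadD[OF assms(3)]] conjunct1[OF leadD[OF assms(4)]]])
  then show False using ne by (rule notE[rotated])
qed

lemma lead_sc:
  assumes "lead W x y" "lead W y z" "lead W z w" "lead W x w"
  shows "lead W x z \<and> lead W y w"
proof -
  have a: "0 \<le> cnt (take i W) x - cnt (take i W) z \<and> cnt (take i W) x - cnt (take i W) z \<le> 1" for i
    by (rule ar_sc1[OF conjunct1[OF leadD[OF assms(1)]] conjunct1[OF leadD[OF assms(2)]]
          conjunct1[OF leadD[OF assms(3)]] conjunct2[OF leadD[OF assms(4)]]])
  have b: "0 \<le> cnt (take i W) y - cnt (take i W) w \<and> cnt (take i W) y - cnt (take i W) w \<le> 1" for i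
    by (rule ar_sc2[OF conjunct1[OF leadD[OF assms(1)]] conjunct1[OF leadD[OF assms(2)]]
          conjunct1[OF leadD[OF assms(3)]] conjunct2[OF leadD[OF assms(4)]]])
  show ?thesis unfolding lead_def using a b by blast
qed


abbreviation NN :: "'a gv set \<Rightarrow> 'a gv" where "NN A \<equiv> Node (Abs_fset A)"

lemma Abs_inj[simp]: "finite A \<Longrightarrow> finite B \<Longrightarrow> Abs_fset A = Abs_fset B \<longleftrightarrow> A = B"
  by (simp add: Abs_fset_inject)

lemma Abs2_eq[simp]: "Abs_fset {a, b} = Abs_fset {c, d} \<longleftrightarrow> {a, b} = {c, d}"
  by simp

definition finE :: "'v graph \<Rightarrow> bool" where
  "finE K \<longleftrightarrow> (\<forall>e\<in>snd K. finite e)"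

lemma line_edge:
  "e \<in> snd K \<Longrightarrow> f \<in> snd K \<Longrightarrow> e \<noteq> f \<Longrightarrow> e \<inter> f \<noteq> {} \<Longrightarrow> {NN e, NN f} \<in> snd (line_graph K)"
  unfolding line_graph_def by auto

lemma line_vert: "e \<in> snd K \<Longrightarrow> NN e \<in> fst (line_graph K)"
  unfolding line_graph_def by auto

lemma line_nonedge:
  assumes "finE K" "e \<in> snd K" "f \<in> snd K" "e \<inter> f = {}"
  shows "{NN e, NN f} \<notin> snd (line_graph K)"
proof
  assume "{NN e, NN f} \<in> snd (line_graph K)"
  then obtain e' f' where h: "{NN e, NN f} = {NN e', NN f'}" "e' \<in> snd K" "f' \<in> snd K" "e' \<inter> f' \<noteq> {}"
    unfolding line_graph_def by auto
  have fin: "finite e" "finite f" "finite e'" "finite f'" using assms(1-3) h(2,3) unfolding finE_def by auto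
  from h(1) have "(NN e = NN e' \<and> NN f = NN f') \<or> (NN e = NN f' \<and> NN f = NN e')"
    by (metis doubleton_eq_iff)
  then have "(e = e' \<and> f = f') \<or> (e = f' \<and> f = e')" using fin by simp
  then show False using assms(4) h(4) by auto
qed

lemma finE_line: "finE (line_graph K)"
  unfolding finE_def line_graph_def by auto

definition W4 :: "'v graph \<Rightarrow> bool" where
  "W4 K \<longleftrightarrow> (\<exists>h r1 r2 r3 r4. distinct [h, r1, r2, r3, r4] \<and>
     {h, r1} \<in> snd K \<and> {h, r2} \<in> snd K \<and> {h, r3} \<in> snd K \<and> {h, r4} \<in> snd K \<and> {r1, r2} \<in> snd K \<and> {r2, r3} \<in> snd K \<and> {r3, r4} \<in> snd K \<and> {r4, r1} \<in> snd K)"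

definition Star4 :: "'v graph \<Rightarrow> bool" where
  "Star4 K \<longleftrightarrow> (\<exists>c a b d e. distinct [c, a, b, d, e] \<and>
     {c, a} \<in> snd K \<and> {c, b} \<in> snd K \<and> {c, d} \<in> snd K \<and> {c, e} \<in> snd K)"

definition K4 :: "'v graph \<Rightarrow> bool" where
  "K4 K \<longleftrightarrow> (\<exists>a b c d. distinct [a, b, c, d] \<and>
     {a, b} \<in> snd K \<and> {a, c} \<in> snd K \<and> {a, d} \<in> snd K \<and> {b, c} \<in> snd K \<and> {b, d} \<in> snd K \<and> {c, d} \<in> snd K)"

definition Paw :: "'v graph \<Rightarrow> bool" where
  "Paw K \<longleftrightarrow> (\<exists>x y z w. distinct [x, y, z, w] \<and>
     {x, y} \<in> snd K \<and> {x, z} \<in> snd K \<and> {y, z} \<in> snd K \<and> {x, w} \<in> snd K)"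

definition Diamond :: "'v graph \<Rightarrow> bool" where
  "Diamond K \<longleftrightarrow> (\<exists>p q r s. distinct [p, q, r, s] \<and>
     {p, q} \<in> snd K \<and> {p, r} \<in> snd K \<and> {q, r} \<in> snd K \<and> {p, s} \<in> snd K \<and> {q, s} \<in> snd K)"

definition Fork :: "'v graph \<Rightarrow> bool" where
  "Fork K \<longleftrightarrow> (\<exists>c a b d e. distinct [c, a, b, d, e] \<and>
     {c, a} \<in> snd K \<and> {c, b} \<in> snd K \<and> {c, d} \<in> snd K \<and> {a, e} \<in> snd K)"

lemma W4_line_W4: "W4 K \<Longrightarrow> W4 (line_graph K)"
proof -
  assume "W4 K"
  then obtain h r1 r2 r3 r4 where di: "distinct [h, r1, r2, r3, r4]" and
    ed: "{h, r1} \<in> snd K" "{h, r2} \<in> snd K" "{h, r3} \<in> snd K" "{h, r4} \<in> snd K" "{r1, r2} \<in> snd K" "{r2, r3} \<in> snd K" "{r3, r4} \<in> snd K" "{r4, r1} \<in> snd K"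
    unfolding W4_def by blast
  have d: "distinct [NN {h, r1}, NN {h, r2}, NN {r1, r2}, NN {r4, r1}, NN {h, r4}]" using di by (auto simp: doubleton_eq_iff)
  have l0: "{NN {h, r1}, NN {h, r2}} \<in> snd (line_graph K)"
    by (rule line_edge) (use ed di in \<open>auto simp: insert_commute doubleton_eq_iff\<close>)
  have l1: "{NN {h, r1}, NN {r1, r2}} \<in> snd (line_graph K)"
    by (rule line_edge) (use ed di in \<open>auto simp: insert_commute doubleton_eq_iff\<close>)
  have l2: "{NN {h, r1}, NN {r4, r1}} \<in> snd (line_graph K)"
    by (rule line_edge) (use ed di in \<open>auto simp: insert_commute doubleton_eq_iff\<close>)
  have l3: "{NN {h, r1}, NN {h, r4}} \<in> snd (line_graph K)"
    by (rule line_edge) (use ed di in \<open>auto simp: insert_commute doubleton_eq_iff\<close>)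
  have l4: "{NN {h, r2}, NN {r1, r2}} \<in> snd (line_graph K)"
    by (rule line_edge) (use ed di in \<open>auto simp: insert_commute doubleton_eq_iff\<close>)
  have l5: "{NN {r1, r2}, NN {r4, r1}} \<in> snd (line_graph K)"
    by (rule line_edge) (use ed di in \<open>auto simp: insert_commute doubleton_eq_iff\<close>)
  have l6: "{NN {r4, r1}, NN {h, r4}} \<in> snd (line_graph K)"
    by (rule line_edge) (use ed di in \<open>auto simp: insert_commute doubleton_eq_iff\<close>)
  have l7: "{NN {h, r4}, NN {h, r2}} \<in> snd (line_graph K)"
    by (rule line_edge) (use ed di in \<open>auto simp: insert_commute doubleton_eq_iff\<close>)
  show ?thesis unfolding W4_def
    apply (rule exI[of _ "NN {h, r1}"], rule exI[of _ "NN {h, r2}"], rule exI[of _ "NN {r1, r2}"], rule exI[of _ "NN {r4, r1}"], rule exI[of _ "NN {h, r4}"])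
    using d l0 l1 l2 l3 l4 l5 l6 l7 by blast
qed

lemma Star4_line_K4: "Star4 K \<Longrightarrow> K4 (line_graph K)"
proof -
  assume "Star4 K"
  then obtain c a b d e where di: "distinct [c, a, b, d, e]" and
    ed: "{c, a} \<in> snd K" "{c, b} \<in> snd K" "{c, d} \<in> snd K" "{c, e} \<in> snd K"
    unfolding Star4_def by blast
  have d: "distinct [NN {c, a}, NN {c, b}, NN {c, d}, NN {c, e}]" using di by (auto simp: doubleton_eq_iff)
  have l0: "{NN {c, a}, NN {c, b}} \<in> snd (line_graph K)"
    by (rule line_edge) (use ed di in \<open>auto simp: insert_commute doubleton_eq_iff\<close>)
  have l1: "{NN {c, a}, NN {c, d}} \<in> snd (line_graph K)"
    by (rule line_edge) (use ed di in \<open>auto simp: insert_commute doubleton_eq_iff\<close>)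
  have l2: "{NN {c, a}, NN {c, e}} \<in> snd (line_graph K)"
    by (rule line_edge) (use ed di in \<open>auto simp: insert_commute doubleton_eq_iff\<close>)
  have l3: "{NN {c, b}, NN {c, d}} \<in> snd (line_graph K)"
    by (rule line_edge) (use ed di in \<open>auto simp: insert_commute doubleton_eq_iff\<close>)
  have l4: "{NN {c, b}, NN {c, e}} \<in> snd (line_graph K)"
    by (rule line_edge) (use ed di in \<open>auto simp: insert_commute doubleton_eq_iff\<close>)
  have l5: "{NN {c, d}, NN {c, e}} \<in> snd (line_graph K)"
    by (rule line_edge) (use ed di in \<open>auto simp: insert_commute doubleton_eq_iff\<close>)
  show ?thesis unfolding K4_def
    apply (rule exI[of _ "NN {c, a}"], rule exI[of _ "NN {c, b}"], rule exI[of _ "NN {c, d}"], rule exI[of _ "NN {c, e}"])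
    using d l0 l1 l2 l3 l4 l5 by blast
qed

lemma K4_line_W4: "K4 K \<Longrightarrow> W4 (line_graph K)"
proof -
  assume "K4 K"
  then obtain a b c d where di: "distinct [a, b, c, d]" and
    ed: "{a, b} \<in> snd K" "{a, c} \<in> snd K" "{a, d} \<in> snd K" "{b, c} \<in> snd K" "{b, d} \<in> snd K" "{c, d} \<in> snd K"
    unfolding K4_def by blast
  have d: "distinct [NN {a, b}, NN {a, c}, NN {a, d}, NN {b, d}, NN {b, c}]" using di by (auto simp: doubleton_eq_iff)
  have l0: "{NN {a, b}, NN {a, c}} \<in> snd (line_graph K)"
    by (rule line_edge) (use ed di in \<open>auto simp: insert_commute doubleton_eq_iff\<close>)
  have l1: "{NN {a, b}, NN {a, d}} \<in> snd (line_graph K)"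
    by (rule line_edge) (use ed di in \<open>auto simp: insert_commute doubleton_eq_iff\<close>)
  have l2: "{NN {a, b}, NN {b, d}} \<in> snd (line_graph K)"
    by (rule line_edge) (use ed di in \<open>auto simp: insert_commute doubleton_eq_iff\<close>)
  have l3: "{NN {a, b}, NN {b, c}} \<in> snd (line_graph K)"
    by (rule line_edge) (use ed di in \<open>auto simp: insert_commute doubleton_eq_iff\<close>)
  have l4: "{NN {a, c}, NN {a, d}} \<in> snd (line_graph K)"
    by (rule line_edge) (use ed di in \<open>auto simp: insert_commute doubleton_eq_iff\<close>)
  have l5: "{NN {a, d}, NN {b, d}} \<in> snd (line_graph K)"
    by (rule line_edge) (use ed di in \<open>auto simp: insert_commute doubleton_eq_iff\<close>)
  have l6: "{NN {b, d}, NN {b, c}} \<in> snd (line_graph K)"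
    by (rule line_edge) (use ed di in \<open>auto simp: insert_commute doubleton_eq_iff\<close>)
  have l7: "{NN {b, c}, NN {a, c}} \<in> snd (line_graph K)"
    by (rule line_edge) (use ed di in \<open>auto simp: insert_commute doubleton_eq_iff\<close>)
  show ?thesis unfolding W4_def
    apply (rule exI[of _ "NN {a, b}"], rule exI[of _ "NN {a, c}"], rule exI[of _ "NN {a, d}"], rule exI[of _ "NN {b, d}"], rule exI[of _ "NN {b, c}"])
    using d l0 l1 l2 l3 l4 l5 l6 l7 by blast
qed

lemma Paw_line_Diamond: "Paw K \<Longrightarrow> Diamond (line_graph K)"
proof -
  assume "Paw K"
  then obtain x y z w where di: "distinct [x, y, z, w]" and
    ed: "{x, y} \<in> snd K" "{x, z} \<in> snd K" "{y, z} \<in> snd K" "{x, w} \<in> snd K"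
    unfolding Paw_def by blast
  have d: "distinct [NN {x, y}, NN {x, z}, NN {y, z}, NN {x, w}]" using di by (auto simp: doubleton_eq_iff)
  have l0: "{NN {x, y}, NN {x, z}} \<in> snd (line_graph K)"
    by (rule line_edge) (use ed di in \<open>auto simp: insert_commute doubleton_eq_iff\<close>)
  have l1: "{NN {x, y}, NN {y, z}} \<in> snd (line_graph K)"
    by (rule line_edge) (use ed di in \<open>auto simp: insert_commute doubleton_eq_iff\<close>)
  have l2: "{NN {x, z}, NN {y, z}} \<in> snd (line_graph K)"
    by (rule line_edge) (use ed di in \<open>auto simp: insert_commute doubleton_eq_iff\<close>)
  have l3: "{NN {x, y}, NN {x, w}} \<in> snd (line_graph K)"
    by (rule line_edge) (use ed di in \<open>auto simp: insert_commute doubleton_eq_iff\<close>)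
  have l4: "{NN {x, z}, NN {x, w}} \<in> snd (line_graph K)"
    by (rule line_edge) (use ed di in \<open>auto simp: insert_commute doubleton_eq_iff\<close>)
  show ?thesis unfolding Diamond_def
    apply (rule exI[of _ "NN {x, y}"], rule exI[of _ "NN {x, z}"], rule exI[of _ "NN {y, z}"], rule exI[of _ "NN {x, w}"])
    using d l0 l1 l2 l3 l4 by blast
qed

lemma Diamond_line_W4: "Diamond K \<Longrightarrow> W4 (line_graph K)"
proof -
  assume "Diamond K"
  then obtain p q r s where di: "distinct [p, q, r, s]" and
    ed: "{p, q} \<in> snd K" "{p, r} \<in> snd K" "{q, r} \<in> snd K" "{p, s} \<in> snd K" "{q, s} \<in> snd K"
    unfolding Diamond_def by blast
  have d: "distinct [NN {p, q}, NN {p, r}, NN {p, s}, NN {q, s}, NN {q, r}]" using di by (auto simp: doubleton_eq_iff)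
  have l0: "{NN {p, q}, NN {p, r}} \<in> snd (line_graph K)"
    by (rule line_edge) (use ed di in \<open>auto simp: insert_commute doubleton_eq_iff\<close>)
  have l1: "{NN {p, q}, NN {p, s}} \<in> snd (line_graph K)"
    by (rule line_edge) (use ed di in \<open>auto simp: insert_commute doubleton_eq_iff\<close>)
  have l2: "{NN {p, q}, NN {q, s}} \<in> snd (line_graph K)"
    by (rule line_edge) (use ed di in \<open>auto simp: insert_commute doubleton_eq_iff\<close>)
  have l3: "{NN {p, q}, NN {q, r}} \<in> snd (line_graph K)"
    by (rule line_edge) (use ed di in \<open>auto simp: insert_commute doubleton_eq_iff\<close>)
  have l4: "{NN {p, r}, NN {p, s}} \<in> snd (line_graph K)"
    by (rule line_edge) (use ed di in \<open>auto simp: insert_commute doubleton_eq_iff\<close>)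
  have l5: "{NN {p, s}, NN {q, s}} \<in> snd (line_graph K)"
    by (rule line_edge) (use ed di in \<open>auto simp: insert_commute doubleton_eq_iff\<close>)
  have l6: "{NN {q, s}, NN {q, r}} \<in> snd (line_graph K)"
    by (rule line_edge) (use ed di in \<open>auto simp: insert_commute doubleton_eq_iff\<close>)
  have l7: "{NN {q, r}, NN {p, r}} \<in> snd (line_graph K)"
    by (rule line_edge) (use ed di in \<open>auto simp: insert_commute doubleton_eq_iff\<close>)
  show ?thesis unfolding W4_def
    apply (rule exI[of _ "NN {p, q}"], rule exI[of _ "NN {p, r}"], rule exI[of _ "NN {p, s}"], rule exI[of _ "NN {q, s}"], rule exI[of _ "NN {q, r}"])
    using d l0 l1 l2 l3 l4 l5 l6 l7 by blast
qed

lemma Fork_line_Paw: "Fork K \<Longrightarrow> Paw (line_graph K)"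
proof -
  assume "Fork K"
  then obtain c a b d e where di: "distinct [c, a, b, d, e]" and
    ed: "{c, a} \<in> snd K" "{c, b} \<in> snd K" "{c, d} \<in> snd K" "{a, e} \<in> snd K"
    unfolding Fork_def by blast
  have d: "distinct [NN {c, a}, NN {c, b}, NN {c, d}, NN {a, e}]" using di by (auto simp: doubleton_eq_iff)
  have l0: "{NN {c, a}, NN {c, b}} \<in> snd (line_graph K)"
    by (rule line_edge) (use ed di in \<open>auto simp: insert_commute doubleton_eq_iff\<close>)
  have l1: "{NN {c, a}, NN {c, d}} \<in> snd (line_graph K)"
    by (rule line_edge) (use ed di in \<open>auto simp: insert_commute doubleton_eq_iff\<close>)
  have l2: "{NN {c, b}, NN {c, d}} \<in> snd (line_graph K)"
    by (rule line_edge) (use ed di in \<open>auto simp: insert_commute doubleton_eq_iff\<close>)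
  have l3: "{NN {c, a}, NN {a, e}} \<in> snd (line_graph K)"
    by (rule line_edge) (use ed di in \<open>auto simp: insert_commute doubleton_eq_iff\<close>)
  show ?thesis unfolding Paw_def
    apply (rule exI[of _ "NN {c, a}"], rule exI[of _ "NN {c, b}"], rule exI[of _ "NN {c, d}"], rule exI[of _ "NN {a, e}"])
    using d l0 l1 l2 l3 by blast
qed


lemma simple_edge:
  assumes "simple_graph G" "{x, y} \<in> snd G"
  shows "x \<in> fst G \<and> y \<in> fst G \<and> x \<noteq> y"
proof -
  obtain a b where "a \<in> fst G" "b \<in> fst G" "a \<noteq> b" "{x, y} = {a, b}"
    using assms unfolding simple_graph_def by blast
  then show ?thesis by (auto simp: doubleton_eq_iff)
qed

lemma exit_edge:
  "reach G x y \<Longrightarrow> x \<in> S \<Longrightarrow> y \<notin> S \<Longrightarrow> \<exists>u z. u \<in> S \<and> z \<notin> S \<and> {u, z} \<in> snd G"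
proof (induction rule: reach.induct)
  case (refl x) then show ?case by simp
next
  case (step x y z)
  show ?case
  proof (cases "y \<in> S")
    case True then show ?thesis using step by blast
  next
    case False then show ?thesis using step by blast
  qed
qed

definition ispath :: "'v graph \<Rightarrow> 'v list \<Rightarrow> bool" where
  "ispath G P \<longleftrightarrow> distinct P \<and> set P \<subseteq> fst G \<and> (\<forall>i. Suc i < length P \<longrightarrow> {P ! i, P ! Suc i} \<in> snd G)"

lemma ispath_cons:
  assumes "ispath G P" "P \<noteq> []" "z \<notin> set P" "z \<in> fst G" "{z, P ! 0} \<in> snd G"
  shows "ispath G (z # P)"
  unfolding ispath_def
proof (intro conjI allI impI)
  show "distinct (z # P)" using assms(1,3) unfolding ispath_def by simp
  show "set (z # P) \<subseteq> fst G" using assms(1,4) unfolding ispath_def by simp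
  fix i assume "Suc i < length (z # P)"
  then show "{(z # P) ! i, (z # P) ! Suc i} \<in> snd G"
    using assms(1,5) unfolding ispath_def by (cases i) auto
qed

lemma ispath_snoc:
  assumes "ispath G P" "P \<noteq> []" "z \<notin> set P" "z \<in> fst G" "{P ! (length P - 1), z} \<in> snd G"
  shows "ispath G (P @ [z])"
  unfolding ispath_def
proof (intro conjI allI impI)
  show "distinct (P @ [z])" using assms(1,3) unfolding ispath_def by simp
  show "set (P @ [z]) \<subseteq> fst G" using assms(1,4) unfolding ispath_def by simp
  fix i assume i: "Suc i < length (P @ [z])"
  show "{(P @ [z]) ! i, (P @ [z]) ! Suc i} \<in> snd G"
  proof (cases "Suc i < length P")
    case True then show ?thesis using assms(1) unfolding ispath_def by (simp add: nth_append)
  next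
    case False
    then have "i = length P - 1" "Suc i = length P" using i by auto
    then show ?thesis using assms(5) by (simp add: nth_append)
  qed
qed

lemma longest_path:
  assumes "finite (fst G)" "v \<in> fst G"
  shows "\<exists>P. ispath G P \<and> (\<forall>Q. ispath G Q \<longrightarrow> length Q \<le> length P)"
proof -
  have "ispath G [v]" using assms(2) unfolding ispath_def by simp
  moreover have "\<forall>Q. ispath G Q \<longrightarrow> length Q < Suc (card (fst G))"
  proof (intro allI impI)
    fix Q assume "ispath G Q"
    then have "distinct Q" "set Q \<subseteq> fst G" unfolding ispath_def by auto
    then have "length Q \<le> card (fst G)" using assms(1) by (metis card_mono distinct_card)
    then show "length Q < Suc (card (fst G))" by simp
  qed
  ultimately show ?thesis using Lattices_Big.ex_has_greatest_nat[of "ispath G" "[v]" length] by blast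
qed

lemma deg2_path_or_cycle:
  assumes sg: "simple_graph G" and cg: "connected_graph G"
    and deg: "\<And>v a b d. {v, a} \<in> snd G \<Longrightarrow> {v, b} \<in> snd G \<Longrightarrow> {v, d} \<in> snd G \<Longrightarrow> \<not> distinct [v, a, b, d]"
  shows "is_path_graph G \<or> is_cycle_graph G"
proof -
  have fin: "finite (fst G)" using sg unfolding simple_graph_def by blast
  obtain v where v: "v \<in> fst G" using cg unfolding connected_graph_def by blast
  obtain P where P: "ispath G P" and lg: "\<And>Q. ispath G Q \<Longrightarrow> length Q \<le> length P"
    using longest_path[OF fin v] by blast
  define k where "k = length P"
  have dP: "distinct P" and sP: "set P \<subseteq> fst G" and nb: "\<And>i. Suc i < k \<Longrightarrow> {P ! i, P ! Suc i} \<in> snd G"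
    using P unfolding ispath_def k_def by auto
  have Pne: "P \<noteq> []" using lg[of "[v]"] v unfolding ispath_def by auto
  then have k1: "k \<ge> 1" unfolding k_def by (simp add: Suc_leI)
  have inj: "\<And>i j. i < k \<Longrightarrow> j < k \<Longrightarrow> P ! i = P ! j \<longleftrightarrow> i = j"
    using dP unfolding k_def by (simp add: nth_eq_iff_index_eq)
  have E1: "z \<in> set P" if "{P ! 0, z} \<in> snd G" for z
  proof (rule ccontr)
    assume "z \<notin> set P"
    moreover have "z \<in> fst G" using simple_edge[OF sg that] by blast
    moreover have "{z, P ! 0} \<in> snd G" using that by (simp add: insert_commute)
    ultimately have "ispath G (z # P)" using ispath_cons[OF P Pne] by blast
    then show False using lg by fastforce
  qed
  have E2: "z \<in> set P" if "{P ! (k - 1), z} \<in> snd G" for z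
  proof (rule ccontr)
    assume "z \<notin> set P"
    moreover have "z \<in> fst G" using simple_edge[OF sg that] by blast
    ultimately have "ispath G (P @ [z])" using ispath_snoc[OF P Pne] that unfolding k_def by blast
    then show False using lg by fastforce
  qed
  have Int: "z = P ! (i - 1) \<or> z = P ! Suc i" if "0 < i" "Suc i < k" "{P ! i, z} \<in> snd G" for i z
  proof (rule ccontr)
    assume nz: "\<not> (z = P ! (i - 1) \<or> z = P ! Suc i)"
    have e1: "{P ! i, P ! (i - 1)} \<in> snd G" using nb[of "i - 1"] that by (simp add: insert_commute)
    have e2: "{P ! i, P ! Suc i} \<in> snd G" using nb[of i] that by simp
    have zi: "z \<noteq> P ! i" using simple_edge[OF sg that(3)] by auto
    have "P ! i \<noteq> P ! (i - 1)" "P ! i \<noteq> P ! Suc i" "P ! (i - 1) \<noteq> P ! Suc i"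
      using inj that by auto
    then have "distinct [P ! i, P ! (i - 1), P ! Suc i, z]" using nz zi by auto
    then show False using deg[OF e1 e2 that(3)] by blast
  qed
  have inP: "z \<in> set P \<Longrightarrow> \<exists>j<k. z = P ! j" for z unfolding k_def by (metis in_set_conv_nth)
  have VP: "fst G = set P"
  proof
    show "set P \<subseteq> fst G" by (rule sP)
    show "fst G \<subseteq> set P"
    proof
      fix w assume w: "w \<in> fst G"
      show "w \<in> set P"
      proof (rule ccontr)
        assume wn: "w \<notin> set P"
        have "P ! 0 \<in> fst G" using sP Pne by auto
        then have "reach G (P ! 0) w" using cg w unfolding connected_graph_def by blast
        then obtain u z where u: "u \<in> set P" and z: "z \<notin> set P" and uz: "{u, z} \<in> snd G"
          using exit_edge[of G "P ! 0" w "set P"] wn Pne by auto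
        obtain i where i: "i < k" "u = P ! i" using inP u by blast
        show False
        proof (cases "i = 0")
          case True
          then have "{P ! 0, z} \<in> snd G" using uz i by simp
          then show ?thesis using E1 z by blast
        next
          case False
          show ?thesis
          proof (cases "Suc i < k")
            case True
            then have "z = P ! (i - 1) \<or> z = P ! Suc i" using Int[of i z] False uz i by auto
            then show ?thesis using z True \<open>i < k\<close> by (metis Suc_lessD less_imp_diff_less nth_mem k_def)
          next
            case False
            then have "i = k - 1" using i by auto
            then have "{P ! (k - 1), z} \<in> snd G" using uz i by simp
            then show ?thesis using E2 z by blast
          qed
        qed
      qed
    qed
  qed
  have cls: "j = Suc i \<or> (i = 0 \<and> j = k - 1)" if ij: "i < j" "j < k" and eij: "{P ! i, P ! j} \<in> snd G" for i j
  proof (cases "i = 0")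
    case False
    then have i0: "0 < i" by simp
    have sik: "Suc i < k" using ij by simp
    have i1k: "i - 1 < k" using ij by simp
    have "P ! j = P ! (i - 1) \<or> P ! j = P ! Suc i" by (rule Int[OF i0 sik eij])
    moreover have "P ! j = P ! (i - 1) \<longleftrightarrow> j = i - 1" by (rule inj[OF ij(2) i1k])
    moreover have "P ! j = P ! Suc i \<longleftrightarrow> j = Suc i" by (rule inj[OF ij(2) sik])
    ultimately have "j = i - 1 \<or> j = Suc i" by blast
    moreover have "j \<noteq> i - 1" using ij by simp
    ultimately show ?thesis by blast
  next
    case True
    show ?thesis
    proof (cases "Suc j < k")
      case False
      then have "j = k - 1" using ij by simp
      then show ?thesis using True by blast
    next
      case jk: True
      have e2: "{P ! j, P ! 0} \<in> snd G" using eij True by (simp add: insert_commute)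
      have j0: "0 < j" using ij True by simp
      have j1k: "j - 1 < k" using ij by simp
      have k0: "0 < k" using ij by simp
      have "P ! 0 = P ! (j - 1) \<or> P ! 0 = P ! Suc j" by (rule Int[OF j0 jk e2])
      moreover have "P ! 0 \<noteq> P ! Suc j" using inj[OF k0 jk] by simp
      ultimately have "P ! 0 = P ! (j - 1)" by blast
      then have "0 = j - 1" using inj[OF k0 j1k] by blast
      then have "j = Suc i" using j0 True by arith
      then show ?thesis by blast
    qed
  qed
  have edge_form: "\<exists>i j. i < j \<and> j < k \<and> e = {P ! i, P ! j}" if e_in: "e \<in> snd G" for e
  proof -
    have all: "\<forall>e\<in>snd G. \<exists>x y. x \<in> fst G \<and> y \<in> fst G \<and> x \<noteq> y \<and> e = {x, y}"
      using sg unfolding simple_graph_def by (rule conjunct2)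
    obtain x y where xy: "x \<in> fst G" "y \<in> fst G" "x \<noteq> y" "e = {x, y}"
      using bspec[OF all e_in] by auto
    have xP: "x \<in> set P" and yP: "y \<in> set P" using xy(1,2) VP by simp_all
    obtain i where i: "i < k" "x = P ! i" using inP[OF xP] by auto
    obtain j where j: "j < k" "y = P ! j" using inP[OF yP] by auto
    have "i \<noteq> j" using xy i j by auto
    then show ?thesis
    proof (cases "i < j")
      case True then show ?thesis by (intro exI[of _ i] exI[of _ j]) (use i j xy in auto)
    next
      case False then have "j < i" using \<open>i \<noteq> j\<close> by auto
      then show ?thesis using i j xy by (intro exI[of _ j] exI[of _ i]) (auto simp: insert_commute)
    qed
  qed
  have bij: "bij_betw (\<lambda>i. P ! i) {0..<k} (fst G)"
    using bij_betw_nth[OF dP] VP unfolding k_def by (simp add: atLeast0LessThan)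
  show ?thesis
  proof (cases "{P ! 0, P ! (k - 1)} \<in> snd G \<and> k \<ge> 3")
    case True
    have "snd G = {{P ! i, P ! (Suc i mod k)} | i. i < k}"
    proof
      show "snd G \<subseteq> {{P ! i, P ! (Suc i mod k)} | i. i < k}"
      proof
        fix e assume e: "e \<in> snd G"
        then obtain i j where ij: "i < j" "j < k" "e = {P ! i, P ! j}" using edge_form by blast
        then have "j = Suc i \<or> (i = 0 \<and> j = k - 1)" using cls[OF ij(1,2)] e ij(3) by simp
        then show "e \<in> {{P ! i, P ! (Suc i mod k)} | i. i < k}"
        proof
          assume "j = Suc i"
          then show ?thesis using ij by auto
        next
          assume h: "i = 0 \<and> j = k - 1"
          have "Suc (k - 1) mod k = 0" using True by simp
          then have "e = {P ! (k - 1), P ! (Suc (k - 1) mod k)}" using h ij by (simp add: insert_commute)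
          moreover have "k - 1 < k" using True by simp
          ultimately show ?thesis by blast
        qed
      qed
      show "{{P ! i, P ! (Suc i mod k)} | i. i < k} \<subseteq> snd G"
      proof
        fix e assume "e \<in> {{P ! i, P ! (Suc i mod k)} | i. i < k}"
        then obtain i where i: "i < k" "e = {P ! i, P ! (Suc i mod k)}" by blast
        show "e \<in> snd G"
        proof (cases "Suc i < k")
          case True then show ?thesis using i nb by simp
        next
          case False
          then have sk: "Suc i = k" using i by simp
          then have "i = k - 1" "Suc i mod k = 0" by simp_all
          then show ?thesis using i True by (simp add: insert_commute)
        qed
      qed
    qed
    then have "is_cycle_graph G" unfolding is_cycle_graph_def
      by (intro exI[of _ k] exI[of _ "\<lambda>i. P ! i"]) (use bij True in auto)
    then show ?thesis by blast
  next
    case False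
    have "snd G = {{P ! i, P ! Suc i} | i. Suc i < k}"
    proof
      show "snd G \<subseteq> {{P ! i, P ! Suc i} | i. Suc i < k}"
      proof
        fix e assume e: "e \<in> snd G"
        then obtain i j where ij: "i < j" "j < k" "e = {P ! i, P ! j}" using edge_form by blast
        then have "j = Suc i \<or> (i = 0 \<and> j = k - 1)" using cls[OF ij(1,2)] e ij(3) by simp
        moreover have "\<not> (i = 0 \<and> j = k - 1 \<and> j \<noteq> Suc i)"
        proof
          assume h: "i = 0 \<and> j = k - 1 \<and> j \<noteq> Suc i"
          then have "k \<ge> 3" using ij by auto
          then show False using False e ij h by auto
        qed
        ultimately have "j = Suc i" by blast
        then show "e \<in> {{P ! i, P ! Suc i} | i. Suc i < k}" using ij by auto
      qed
      show "{{P ! i, P ! Suc i} | i. Suc i < k} \<subseteq> snd G" using nb by blast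
    qed
    then have "is_path_graph G" unfolding is_path_graph_def
      by (intro exI[of _ k] exI[of _ "\<lambda>i. P ! i"]) (use bij k1 in auto)
    then show ?thesis by blast
  qed
qed


lemma LW4_core:
 fixes R :: "'v \<Rightarrow> 'v \<Rightarrow> bool"
 assumes tri: "\<And>x y z. x \<noteq> z \<Longrightarrow> R x y \<Longrightarrow> R y z \<Longrightarrow> R z x \<Longrightarrow> False"
 and sc: "\<And>x y z w. R x y \<Longrightarrow> R y z \<Longrightarrow> R z w \<Longrightarrow> R x w \<Longrightarrow> R x z \<and> R y w"
 and anti: "\<And>x y. x \<noteq> y \<Longrightarrow> R x y \<Longrightarrow> R y x \<Longrightarrow> False"
 and dist: "distinct [a,b,c,d,p,q,r,t]"
 and ed: "R a b \<or> R b a" "R a c \<or> R c a" "R a d \<or> R d a" "R b c \<or> R c b" "R b d \<or> R d b" "R c d \<or> R d c" "R a p \<or> R p a" "R a t \<or> R t a" "R b p \<or> R p b" "R b q \<or> R q b" "R c q \<or> R q c" "R c r \<or> R r c" "R d r \<or> R r d" "R d t \<or> R t d" "R p q \<or> R q p" "R q r \<or> R r q" "R r t \<or> R t r" "R t p \<or> R p t"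
 and nonadj: "\<not> R a q" "\<not> R a r" "\<not> R b r" "\<not> R b t" "\<not> R c p" "\<not> R c t" "\<not> R d p" "\<not> R d q" "\<not> R p c" "\<not> R p d" "\<not> R p r" "\<not> R q a" "\<not> R q d" "\<not> R q t" "\<not> R r a" "\<not> R r b" "\<not> R r p" "\<not> R t b" "\<not> R t c" "\<not> R t q"
 and ab: "R a b"
 shows False
proof -
  have h1: "\<not> R b a" using anti[of a b] dist ab by auto
  show False
  proof (cases "R a c")
    case True
    note c2 = True
    have h3: "\<not> R c a" using anti[of a c] dist c2 by auto
    show False
    proof (cases "R a t")
      case True
      note c77610 = True
      have h77611: "\<not> R t a" using anti[of a t] dist c77610 by auto
      show False
      proof (cases "R c r")
        case True
        note c88415 = True
        have h88416: "\<not> R r t" using sc[of a c r t] nonadj c2 c88415 c77610 by blast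
        have h88417: "\<not> R r c" using anti[of c r] dist c88415 by auto
        have h88418: "R t r" using ed(17) h88416 by blast
        show False
        proof (cases "R b p")
          case True
          note c88792 = True
          have h88793: "\<not> R p a" using tri[of a p b] dist ab c88792 by auto
          have h88794: "\<not> R p t" using sc[of a b p t] nonadj ab c88792 c77610 by blast
          have h88795: "\<not> R p b" using anti[of b p] dist c88792 by auto
          have h88796: "R a p" using ed(7) h88793 by blast
          have h88797: "R t p" using ed(18) h88794 by blast
          have h88798: "\<not> R c b" using sc[of a c b p] nonadj c2 c88792 h88796 by blast
          have h88799: "R b c" using ed(4) h88798 by blast
          show False
          proof (cases "R b q")
            case True
            note c88830 = True
            have h88831: "\<not> R q c" using sc[of a b q c] nonadj ab c88830 c2 by blast
            have h88832: "\<not> R q p" using sc[of a b q p] nonadj ab c88830 h88796 by blast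
            have h88833: "\<not> R r q" using sc[of b c r q] nonadj h88799 c88415 c88830 by blast
            have h88834: "\<not> R q b" using anti[of b q] dist c88830 by auto
            have h88835: "R c q" using ed(11) h88831 by blast
            have h88836: "R p q" using ed(15) h88832 by blast
            have h88837: "R q r" using ed(16) h88833 by blast
            show False using sc[of t p q r] nonadj h88797 h88836 h88837 h88418 by blast
          next
            case False
            note c88838 = False
            have h88839: "R q b" using ed(10) c88838 by blast
            have h88840: "\<not> R c q" using tri[of b q c] dist h88799 h88839 by auto
            have h88841: "\<not> R p q" using tri[of b q p] dist c88792 h88839 by auto
            have h88842: "\<not> R q r" using sc[of q b c r] nonadj h88839 h88799 c88415 by blast
            have h88843: "R q c" using ed(11) h88840 by blast
            have h88844: "R q p" using ed(15) h88841 by blast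
            have h88845: "R r q" using ed(16) h88842 by blast
            show False using tri[of c q r] dist c88415 h88845 h88843 by auto
          qed
        next
          case False
          note c88846 = False
          have h88847: "R p b" using ed(9) c88846 by blast
          have h88848: "\<not> R t p" using sc[of a t p b] nonadj c77610 h88847 ab by blast
          have h88849: "R p t" using ed(18) h88848 by blast
          show False
          proof (cases "R b q")
            case True
            note c88890 = True
            have h88891: "\<not> R q p" using tri[of b p q] dist c88890 h88847 by auto
            have h88892: "\<not> R q c" using sc[of a b q c] nonadj ab c88890 c2 by blast
            have h88893: "\<not> R q b" using anti[of b q] dist c88890 by auto
            have h88894: "R c q" using ed(11) h88892 by blast
            have h88895: "R p q" using ed(15) h88891 by blast
            have h88896: "\<not> R p a" using sc[of p a b q] nonadj ab c88890 h88895 by blast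
            have h88897: "\<not> R b c" using sc[of p b c q] nonadj h88847 h88894 h88895 by blast
            have h88898: "\<not> R r q" using sc[of p t r q] nonadj h88849 h88418 h88895 by blast
            have h88899: "R c b" using ed(4) h88897 by blast
            have h88900: "R a p" using ed(7) h88896 by blast
            have h88901: "R q r" using ed(16) h88898 by blast
            show False using sc[of c b q r] nonadj h88899 c88890 h88901 c88415 by blast
          next
            case False
            note c88902 = False
            have h88903: "R q b" using ed(10) c88902 by blast
            have h88904: "\<not> R c q" using sc[of a c q b] nonadj c2 h88903 ab by blast
            have h88905: "R q c" using ed(11) h88904 by blast
            have h88906: "\<not> R r q" using tri[of c q r] dist c88415 h88905 by auto
            have h88907: "R q r" using ed(16) h88906 by blast
            have h88908: "\<not> R b c" using sc[of q b c r] nonadj h88903 c88415 h88907 by blast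
            have h88909: "\<not> R q p" using sc[of q p t r] nonadj h88849 h88418 h88907 by blast
            have h88910: "R c b" using ed(4) h88908 by blast
            have h88911: "R p q" using ed(15) h88909 by blast
            have h88912: "\<not> R a p" using sc[of a p q b] nonadj h88911 h88903 ab by blast
            have h88913: "\<not> R p a" using sc[of p a c b] nonadj c2 h88910 h88847 by blast
            show False using sc[of p q c b] nonadj h88911 h88905 h88910 h88847 by blast
          qed
        qed
      next
        case False
        note c88914 = False
        have h88915: "R r c" using ed(12) c88914 by blast
        have h88916: "\<not> R t r" using sc[of a t r c] nonadj c77610 h88915 c2 by blast
        have h88917: "R r t" using ed(17) h88916 by blast
        show False
        proof (cases "R p q")
          case True
          note c90020 = True
          have h90021: "\<not> R q p" using anti[of p q] dist c90020 by auto
          show False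
          proof (cases "R a p")
            case True
            note c90052 = True
            have h90053: "\<not> R q b" using sc[of a p q b] nonadj c90052 c90020 ab by blast
            have h90054: "\<not> R q c" using sc[of a p q c] nonadj c90052 c90020 c2 by blast
            have h90055: "\<not> R p a" using anti[of a p] dist c90052 by auto
            have h90056: "R b q" using ed(10) h90053 by blast
            have h90057: "R c q" using ed(11) h90054 by blast
            have h90058: "\<not> R q r" using tri[of c r q] dist h90057 h88915 by auto
            have h90059: "R r q" using ed(16) h90058 by blast
            have h90060: "\<not> R c b" using sc[of r c b q] nonadj h88915 h90056 h90059 by blast
            have h90061: "\<not> R t p" using sc[of r t p q] nonadj h88917 c90020 h90059 by blast
            have h90062: "R b c" using ed(4) h90060 by blast
            have h90063: "R p t" using ed(18) h90061 by blast
            have h90064: "\<not> R b p" using sc[of a b p t] nonadj ab h90063 c77610 by blast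
            have h90065: "\<not> R p b" using sc[of a p b c] nonadj c90052 h90062 c2 by blast
            show False using ed(9) h90064 h90065 by blast
          next
            case False
            note c90066 = False
            have h90067: "R p a" using ed(7) c90066 by blast
            have h90068: "\<not> R b p" using tri[of a p b] dist ab h90067 by auto
            have h90069: "\<not> R t p" using tri[of a p t] dist c77610 h90067 by auto
            have h90070: "\<not> R b q" using sc[of p a b q] nonadj h90067 ab c90020 by blast
            have h90071: "\<not> R c q" using sc[of p a c q] nonadj h90067 c2 c90020 by blast
            have h90072: "R p b" using ed(9) h90068 by blast
            have h90073: "R q b" using ed(10) h90070 by blast
            have h90074: "R q c" using ed(11) h90071 by blast
            have h90075: "R p t" using ed(18) h90069 by blast
            have h90076: "\<not> R c b" using sc[of p a c b] nonadj h90067 c2 h90072 by blast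
            have h90077: "\<not> R q r" using sc[of p q r t] nonadj c90020 h88917 h90075 by blast
            have h90078: "R b c" using ed(4) h90076 by blast
            have h90079: "R r q" using ed(16) h90077 by blast
            show False using sc[of r q b c] nonadj h90079 h90073 h90078 h88915 by blast
          qed
        next
          case False
          note c90080 = False
          have h90081: "R q p" using ed(15) c90080 by blast
          show False
          proof (cases "R b p")
            case True
            note c90118 = True
            have h90119: "\<not> R p a" using tri[of a p b] dist ab c90118 by auto
            have h90120: "\<not> R p t" using sc[of a b p t] nonadj ab c90118 c77610 by blast
            have h90121: "\<not> R p b" using anti[of b p] dist c90118 by auto
            have h90122: "R a p" using ed(7) h90119 by blast
            have h90123: "R t p" using ed(18) h90120 by blast
            have h90124: "\<not> R b q" using sc[of a b q p] nonadj ab h90081 h90122 by blast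
            have h90125: "\<not> R c b" using sc[of a c b p] nonadj c2 c90118 h90122 by blast
            have h90126: "\<not> R c q" using sc[of a c q p] nonadj c2 h90081 h90122 by blast
            have h90127: "\<not> R q r" using sc[of q r t p] nonadj h88917 h90123 h90081 by blast
            have h90128: "R b c" using ed(4) h90125 by blast
            have h90129: "R q b" using ed(10) h90124 by blast
            have h90130: "R q c" using ed(11) h90126 by blast
            have h90131: "R r q" using ed(16) h90127 by blast
            show False using sc[of r q b c] nonadj h90131 h90129 h90128 h88915 by blast
          next
            case False
            note c90132 = False
            have h90133: "R p b" using ed(9) c90132 by blast
            have h90134: "\<not> R b q" using tri[of b p q] dist h90081 h90133 by auto
            have h90135: "\<not> R t p" using sc[of a t p b] nonadj c77610 h90133 ab by blast
            have h90136: "R q b" using ed(10) h90134 by blast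
            have h90137: "R p t" using ed(18) h90135 by blast
            have h90138: "\<not> R c q" using sc[of a c q b] nonadj c2 h90136 ab by blast
            have h90139: "\<not> R p a" using sc[of q p a b] nonadj h90081 ab h90136 by blast
            have h90140: "\<not> R r q" using sc[of r q p t] nonadj h90081 h90137 h88917 by blast
            have h90141: "R a p" using ed(7) h90139 by blast
            have h90142: "R q c" using ed(11) h90138 by blast
            have h90143: "R q r" using ed(16) h90140 by blast
            have h90144: "\<not> R b c" using sc[of a p b c] nonadj h90141 h90133 c2 by blast
            have h90145: "\<not> R c b" using sc[of q r c b] nonadj h90143 h88915 h90136 by blast
            show False using ed(4) h90144 h90145 by blast
          qed
        qed
      qed
    next
      case False
      note c90146 = False
      have h90147: "R t a" using ed(8) c90146 by blast
      show False
      proof (cases "R a p")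
        case True
        note c95465 = True
        have h95466: "\<not> R p t" using tri[of a t p] dist c95465 h90147 by auto
        have h95467: "\<not> R p a" using anti[of a p] dist c95465 by auto
        have h95468: "R t p" using ed(18) h95466 by blast
        have h95469: "\<not> R b p" using sc[of t a b p] nonadj h90147 ab h95468 by blast
        have h95470: "R p b" using ed(9) h95469 by blast
        have h95471: "\<not> R b c" using sc[of a p b c] nonadj c95465 h95470 c2 by blast
        have h95472: "R c b" using ed(4) h95471 by blast
        show False
        proof (cases "R b q")
          case True
          note c95677 = True
          have h95678: "\<not> R q c" using tri[of b c q] dist c95677 h95472 by auto
          have h95679: "\<not> R q p" using tri[of b p q] dist c95677 h95470 by auto
          have h95680: "\<not> R q b" using anti[of b q] dist c95677 by auto
          have h95681: "R c q" using ed(11) h95678 by blast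
          have h95682: "R p q" using ed(15) h95679 by blast
          show False
          proof (cases "R c r")
            case True
            note c95721 = True
            have h95722: "\<not> R q r" using sc[of c b q r] nonadj h95472 c95677 c95721 by blast
            have h95723: "\<not> R t r" using sc[of t a c r] nonadj h90147 c2 c95721 by blast
            have h95724: "\<not> R r c" using anti[of c r] dist c95721 by auto
            have h95725: "R r q" using ed(16) h95722 by blast
            have h95726: "R r t" using ed(17) h95723 by blast
            show False using sc[of r t p q] nonadj h95726 h95468 h95682 h95725 by blast
          next
            case False
            note c95727 = False
            have h95728: "R r c" using ed(12) c95727 by blast
            have h95729: "\<not> R q r" using tri[of c r q] dist h95681 h95728 by auto
            have h95730: "\<not> R r q" using sc[of r c b q] nonadj h95728 h95472 c95677 by blast
            have h95731: "\<not> R r t" using sc[of r t a c] nonadj h90147 c2 h95728 by blast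
            show False using ed(16) h95729 h95730 by blast
          qed
        next
          case False
          note c95732 = False
          have h95733: "R q b" using ed(10) c95732 by blast
          have h95734: "\<not> R c q" using sc[of a c q b] nonadj c2 h95733 ab by blast
          have h95735: "\<not> R p q" using sc[of a p q b] nonadj c95465 h95733 ab by blast
          have h95736: "R q c" using ed(11) h95734 by blast
          have h95737: "R q p" using ed(15) h95735 by blast
          show False
          proof (cases "R c r")
            case True
            note c95776 = True
            have h95777: "\<not> R r q" using tri[of c q r] dist c95776 h95736 by auto
            have h95778: "\<not> R t r" using sc[of t a c r] nonadj h90147 c2 c95776 by blast
            have h95779: "\<not> R r c" using anti[of c r] dist c95776 by auto
            have h95780: "R q r" using ed(16) h95777 by blast
            have h95781: "R r t" using ed(17) h95778 by blast
            show False using sc[of q r t p] nonadj h95780 h95781 h95468 h95737 by blast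
          next
            case False
            note c95782 = False
            have h95783: "R r c" using ed(12) c95782 by blast
            have h95784: "\<not> R q r" using sc[of q r c b] nonadj h95783 h95472 h95733 by blast
            have h95785: "\<not> R r t" using sc[of r t a c] nonadj h90147 c2 h95783 by blast
            have h95786: "R r q" using ed(16) h95784 by blast
            have h95787: "R t r" using ed(17) h95785 by blast
            show False using sc[of t r q p] nonadj h95787 h95786 h95737 h95468 by blast
          qed
        qed
      next
        case False
        note c95788 = False
        have h95789: "R p a" using ed(7) c95788 by blast
        have h95790: "\<not> R b p" using tri[of a p b] dist ab h95789 by auto
        have h95791: "R p b" using ed(9) h95790 by blast
        have h95792: "\<not> R c b" using sc[of p a c b] nonadj h95789 c2 h95791 by blast
        have h95793: "\<not> R p t" using sc[of p t a b] nonadj h90147 ab h95791 by blast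
        have h95794: "R b c" using ed(4) h95792 by blast
        have h95795: "R t p" using ed(18) h95793 by blast
        show False
        proof (cases "R b q")
          case True
          note c96023 = True
          have h96024: "\<not> R q p" using tri[of b p q] dist c96023 h95791 by auto
          have h96025: "\<not> R q c" using sc[of a b q c] nonadj ab c96023 c2 by blast
          have h96026: "\<not> R p q" using sc[of p a b q] nonadj h95789 ab c96023 by blast
          have h96027: "\<not> R q b" using anti[of b q] dist c96023 by auto
          have h96028: "R c q" using ed(11) h96025 by blast
          show False using ed(15) h96026 h96024 by blast
        next
          case False
          note c96029 = False
          have h96030: "R q b" using ed(10) c96029 by blast
          have h96031: "\<not> R c q" using tri[of b q c] dist h95794 h96030 by auto
          have h96032: "\<not> R q p" using sc[of q p a b] nonadj h95789 ab h96030 by blast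
          have h96033: "R q c" using ed(11) h96031 by blast
          have h96034: "R p q" using ed(15) h96032 by blast
          show False
          proof (cases "R c r")
            case True
            note c96081 = True
            have h96082: "\<not> R r q" using tri[of c q r] dist c96081 h96033 by auto
            have h96083: "\<not> R q r" using sc[of q b c r] nonadj h96030 h95794 c96081 by blast
            have h96084: "\<not> R t r" using sc[of t a c r] nonadj h90147 c2 c96081 by blast
            have h96085: "\<not> R r c" using anti[of c r] dist c96081 by auto
            show False using ed(16) h96083 h96082 by blast
          next
            case False
            note c96086 = False
            have h96087: "R r c" using ed(12) c96086 by blast
            have h96088: "\<not> R r q" using sc[of r q b c] nonadj h96030 h95794 h96087 by blast
            have h96089: "\<not> R r t" using sc[of r t a c] nonadj h90147 c2 h96087 by blast
            have h96090: "R q r" using ed(16) h96088 by blast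
            have h96091: "R t r" using ed(17) h96089 by blast
            show False using sc[of t p q r] nonadj h95795 h96034 h96090 h96091 by blast
          qed
        qed
      qed
    qed
  next
    case False
    note c96092 = False
    have h96093: "R c a" using ed(2) c96092 by blast
    have h96094: "\<not> R b c" using tri[of a c b] dist ab h96093 by auto
    have h96095: "R c b" using ed(4) h96094 by blast
    show False
    proof (cases "R a p")
      case True
      note c132874 = True
      have h132875: "\<not> R p b" using sc[of c a p b] nonadj h96093 c132874 h96095 by blast
      have h132876: "\<not> R p a" using anti[of a p] dist c132874 by auto
      have h132877: "R b p" using ed(9) h132875 by blast
      show False
      proof (cases "R a t")
        case True
        note c135447 = True
        have h135448: "\<not> R p t" using sc[of a b p t] nonadj ab h132877 c135447 by blast
        have h135449: "\<not> R t a" using anti[of a t] dist c135447 by auto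
        have h135450: "R t p" using ed(18) h135448 by blast
        show False
        proof (cases "R b q")
          case True
          note c135638 = True
          have h135639: "\<not> R q c" using tri[of b c q] dist c135638 h96095 by auto
          have h135640: "\<not> R q p" using sc[of a b q p] nonadj ab c135638 c132874 by blast
          have h135641: "\<not> R c q" using sc[of c a b q] nonadj h96093 ab c135638 by blast
          have h135642: "\<not> R q b" using anti[of b q] dist c135638 by auto
          show False using ed(11) h135641 h135639 by blast
        next
          case False
          note c135643 = False
          have h135644: "R q b" using ed(10) c135643 by blast
          have h135645: "\<not> R p q" using tri[of b q p] dist h132877 h135644 by auto
          have h135646: "\<not> R q c" using sc[of q c a b] nonadj h96093 ab h135644 by blast
          have h135647: "R c q" using ed(11) h135646 by blast
          have h135648: "R q p" using ed(15) h135645 by blast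
          show False
          proof (cases "R c r")
            case True
            note c135688 = True
            have h135689: "\<not> R t r" using sc[of c a t r] nonadj h96093 c135447 c135688 by blast
            have h135690: "\<not> R r q" using sc[of c r q b] nonadj c135688 h135644 h96095 by blast
            have h135691: "\<not> R r c" using anti[of c r] dist c135688 by auto
            have h135692: "R q r" using ed(16) h135690 by blast
            have h135693: "R r t" using ed(17) h135689 by blast
            show False using sc[of q r t p] nonadj h135692 h135693 h135450 h135648 by blast
          next
            case False
            note c135694 = False
            have h135695: "R r c" using ed(12) c135694 by blast
            have h135696: "\<not> R q r" using tri[of c r q] dist h135647 h135695 by auto
            have h135697: "\<not> R r t" using sc[of r c a t] nonadj h135695 h96093 c135447 by blast
            have h135698: "R r q" using ed(16) h135696 by blast
            have h135699: "R t r" using ed(17) h135697 by blast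
            show False using sc[of t r q p] nonadj h135699 h135698 h135648 h135450 by blast
          qed
        qed
      next
        case False
        note c135700 = False
        have h135701: "R t a" using ed(8) c135700 by blast
        have h135702: "\<not> R p t" using tri[of a t p] dist c132874 h135701 by auto
        have h135703: "\<not> R t p" using sc[of t a b p] nonadj h135701 ab h132877 by blast
        show False using ed(18) h135703 h135702 by blast
      qed
    next
      case False
      note c135704 = False
      have h135705: "R p a" using ed(7) c135704 by blast
      have h135706: "\<not> R b p" using tri[of a p b] dist ab h135705 by auto
      have h135707: "R p b" using ed(9) h135706 by blast
      show False
      proof (cases "R a t")
        case True
        note c138133 = True
        have h138134: "\<not> R t p" using tri[of a p t] dist c138133 h135705 by auto
        have h138135: "\<not> R t a" using anti[of a t] dist c138133 by auto
        have h138136: "R p t" using ed(18) h138134 by blast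
        show False
        proof (cases "R b q")
          case True
          note c138309 = True
          have h138310: "\<not> R q c" using tri[of b c q] dist c138309 h96095 by auto
          have h138311: "\<not> R q p" using tri[of b p q] dist c138309 h135707 by auto
          have h138312: "\<not> R c q" using sc[of c a b q] nonadj h96093 ab c138309 by blast
          have h138313: "\<not> R p q" using sc[of p a b q] nonadj h135705 ab c138309 by blast
          have h138314: "\<not> R q b" using anti[of b q] dist c138309 by auto
          show False using ed(11) h138312 h138310 by blast
        next
          case False
          note c138315 = False
          have h138316: "R q b" using ed(10) c138315 by blast
          have h138317: "\<not> R q c" using sc[of q c a b] nonadj h96093 ab h138316 by blast
          have h138318: "\<not> R q p" using sc[of q p a b] nonadj h135705 ab h138316 by blast
          have h138319: "R c q" using ed(11) h138317 by blast
          have h138320: "R p q" using ed(15) h138318 by blast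
          show False
          proof (cases "R c r")
            case True
            note c138360 = True
            have h138361: "\<not> R t r" using sc[of c a t r] nonadj h96093 c138133 c138360 by blast
            have h138362: "\<not> R r q" using sc[of c r q b] nonadj c138360 h138316 h96095 by blast
            have h138363: "\<not> R r c" using anti[of c r] dist c138360 by auto
            have h138364: "R q r" using ed(16) h138362 by blast
            have h138365: "R r t" using ed(17) h138361 by blast
            show False using sc[of p q r t] nonadj h138320 h138364 h138365 h138136 by blast
          next
            case False
            note c138366 = False
            have h138367: "R r c" using ed(12) c138366 by blast
            have h138368: "\<not> R q r" using tri[of c r q] dist h138319 h138367 by auto
            have h138369: "\<not> R r t" using sc[of r c a t] nonadj h138367 h96093 c138133 by blast
            have h138370: "R r q" using ed(16) h138368 by blast
            have h138371: "R t r" using ed(17) h138369 by blast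
            show False using sc[of p t r q] nonadj h138136 h138371 h138370 h138320 by blast
          qed
        qed
      next
        case False
        note c138372 = False
        have h138373: "R t a" using ed(8) c138372 by blast
        have h138374: "\<not> R p t" using sc[of p t a b] nonadj h138373 ab h135707 by blast
        have h138375: "R t p" using ed(18) h138374 by blast
        show False
        proof (cases "R b q")
          case True
          note c138548 = True
          have h138549: "\<not> R q c" using tri[of b c q] dist c138548 h96095 by auto
          have h138550: "\<not> R q p" using tri[of b p q] dist c138548 h135707 by auto
          have h138551: "\<not> R c q" using sc[of c a b q] nonadj h96093 ab c138548 by blast
          have h138552: "\<not> R p q" using sc[of p a b q] nonadj h135705 ab c138548 by blast
          have h138553: "\<not> R q b" using anti[of b q] dist c138548 by auto
          show False using ed(11) h138551 h138549 by blast
        next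
          case False
          note c138554 = False
          have h138555: "R q b" using ed(10) c138554 by blast
          have h138556: "\<not> R q c" using sc[of q c a b] nonadj h96093 ab h138555 by blast
          have h138557: "\<not> R q p" using sc[of q p a b] nonadj h135705 ab h138555 by blast
          have h138558: "R c q" using ed(11) h138556 by blast
          have h138559: "R p q" using ed(15) h138557 by blast
          show False
          proof (cases "R c r")
            case True
            note c138599 = True
            have h138600: "\<not> R r q" using sc[of c r q b] nonadj c138599 h138555 h96095 by blast
            have h138601: "\<not> R r t" using sc[of c r t a] nonadj c138599 h138373 h96093 by blast
            have h138602: "\<not> R r c" using anti[of c r] dist c138599 by auto
            have h138603: "R q r" using ed(16) h138600 by blast
            have h138604: "R t r" using ed(17) h138601 by blast
            show False using sc[of t p q r] nonadj h138375 h138559 h138603 h138604 by blast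
          next
            case False
            note c138605 = False
            have h138606: "R r c" using ed(12) c138605 by blast
            have h138607: "\<not> R q r" using tri[of c r q] dist h138558 h138606 by auto
            have h138608: "\<not> R t r" using sc[of t r c a] nonadj h138606 h96093 h138373 by blast
            have h138609: "R r q" using ed(16) h138607 by blast
            have h138610: "R r t" using ed(17) h138608 by blast
            show False using sc[of r t p q] nonadj h138610 h138375 h138559 h138609 by blast
          qed
        qed
      qed
    qed
  qed
qed

lemma LW4_wrap:
 fixes R :: "'v \<Rightarrow> 'v \<Rightarrow> bool"
 assumes tri: "\<And>x y z. x \<noteq> z \<Longrightarrow> R x y \<Longrightarrow> R y z \<Longrightarrow> R z x \<Longrightarrow> False"
 and sc: "\<And>x y z w. R x y \<Longrightarrow> R y z \<Longrightarrow> R z w \<Longrightarrow> R x w \<Longrightarrow> R x z \<and> R y w"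
 and anti: "\<And>x y. x \<noteq> y \<Longrightarrow> R x y \<Longrightarrow> R y x \<Longrightarrow> False"
 and dist: "distinct [a,b,c,d,p,q,r,t]"
 and ed: "R a b \<or> R b a" "R a c \<or> R c a" "R a d \<or> R d a" "R b c \<or> R c b" "R b d \<or> R d b" "R c d \<or> R d c" "R a p \<or> R p a" "R a t \<or> R t a" "R b p \<or> R p b" "R b q \<or> R q b" "R c q \<or> R q c" "R c r \<or> R r c" "R d r \<or> R r d" "R d t \<or> R t d" "R p q \<or> R q p" "R q r \<or> R r q" "R r t \<or> R t r" "R t p \<or> R p t"
 and nonadj: "\<not> R a q" "\<not> R a r" "\<not> R b r" "\<not> R b t" "\<not> R c p" "\<not> R c t" "\<not> R d p" "\<not> R d q" "\<not> R p c" "\<not> R p d" "\<not> R p r" "\<not> R q a" "\<not> R q d" "\<not> R q t" "\<not> R r a" "\<not> R r b" "\<not> R r p" "\<not> R t b" "\<not> R t c" "\<not> R t q"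
 shows False
proof (cases "R a b")
  case True
  show False by (rule LW4_core[OF tri sc anti dist ed nonadj True])
next
  case False
  then have ba: "R b a" using ed(1) by blast
  define R' where "R' = (\<lambda>x y. R y x)"
  have tri': "False" if "x \<noteq> z" "R' x y" "R' y z" "R' z x" for x y z
    by (rule tri[where x=z and y=y and z=x]) (use that in \<open>auto simp: R'_def\<close>)
  have sc': "R' x z \<and> R' y w" if "R' x y" "R' y z" "R' z w" "R' x w" for x y z w
    using sc[where x=w and y=z and z=y and w=x] that unfolding R'_def by blast
  have anti': "False" if "x \<noteq> y" "R' x y" "R' y x" for x y
    by (rule anti[where x=y and y=x]) (use that in \<open>auto simp: R'_def\<close>)
  have ed'0: "R' a b \<or> R' b a" unfolding R'_def using ed(1) by blast
  have ed'1: "R' a c \<or> R' c a" unfolding R'_def using ed(2) by blast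
  have ed'2: "R' a d \<or> R' d a" unfolding R'_def using ed(3) by blast
  have ed'3: "R' b c \<or> R' c b" unfolding R'_def using ed(4) by blast
  have ed'4: "R' b d \<or> R' d b" unfolding R'_def using ed(5) by blast
  have ed'5: "R' c d \<or> R' d c" unfolding R'_def using ed(6) by blast
  have ed'6: "R' a p \<or> R' p a" unfolding R'_def using ed(7) by blast
  have ed'7: "R' a t \<or> R' t a" unfolding R'_def using ed(8) by blast
  have ed'8: "R' b p \<or> R' p b" unfolding R'_def using ed(9) by blast
  have ed'9: "R' b q \<or> R' q b" unfolding R'_def using ed(10) by blast
  have ed'10: "R' c q \<or> R' q c" unfolding R'_def using ed(11) by blast
  have ed'11: "R' c r \<or> R' r c" unfolding R'_def using ed(12) by blast
  have ed'12: "R' d r \<or> R' r d" unfolding R'_def using ed(13) by blast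
  have ed'13: "R' d t \<or> R' t d" unfolding R'_def using ed(14) by blast
  have ed'14: "R' p q \<or> R' q p" unfolding R'_def using ed(15) by blast
  have ed'15: "R' q r \<or> R' r q" unfolding R'_def using ed(16) by blast
  have ed'16: "R' r t \<or> R' t r" unfolding R'_def using ed(17) by blast
  have ed'17: "R' t p \<or> R' p t" unfolding R'_def using ed(18) by blast
  have nonadj'0: "\<not> R' a q" unfolding R'_def using nonadj by blast
  have nonadj'1: "\<not> R' a r" unfolding R'_def using nonadj by blast
  have nonadj'2: "\<not> R' b r" unfolding R'_def using nonadj by blast
  have nonadj'3: "\<not> R' b t" unfolding R'_def using nonadj by blast
  have nonadj'4: "\<not> R' c p" unfolding R'_def using nonadj by blast
  have nonadj'5: "\<not> R' c t" unfolding R'_def using nonadj by blast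
  have nonadj'6: "\<not> R' d p" unfolding R'_def using nonadj by blast
  have nonadj'7: "\<not> R' d q" unfolding R'_def using nonadj by blast
  have nonadj'8: "\<not> R' p c" unfolding R'_def using nonadj by blast
  have nonadj'9: "\<not> R' p d" unfolding R'_def using nonadj by blast
  have nonadj'10: "\<not> R' p r" unfolding R'_def using nonadj by blast
  have nonadj'11: "\<not> R' q a" unfolding R'_def using nonadj by blast
  have nonadj'12: "\<not> R' q d" unfolding R'_def using nonadj by blast
  have nonadj'13: "\<not> R' q t" unfolding R'_def using nonadj by blast
  have nonadj'14: "\<not> R' r a" unfolding R'_def using nonadj by blast
  have nonadj'15: "\<not> R' r b" unfolding R'_def using nonadj by blast
  have nonadj'16: "\<not> R' r p" unfolding R'_def using nonadj by blast
  have nonadj'17: "\<not> R' t b" unfolding R'_def using nonadj by blast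
  have nonadj'18: "\<not> R' t c" unfolding R'_def using nonadj by blast
  have nonadj'19: "\<not> R' t q" unfolding R'_def using nonadj by blast
  have ab': "R' a b" unfolding R'_def by (rule ba)
  show False by (rule LW4_core[OF tri' sc' anti' dist ed'0 ed'1 ed'2 ed'3 ed'4 ed'5 ed'6 ed'7 ed'8 ed'9 ed'10 ed'11 ed'12 ed'13 ed'14 ed'15 ed'16 ed'17 nonadj'0 nonadj'1 nonadj'2 nonadj'3 nonadj'4 nonadj'5 nonadj'6 nonadj'7 nonadj'8 nonadj'9 nonadj'10 nonadj'11 nonadj'12 nonadj'13 nonadj'14 nonadj'15 nonadj'16 nonadj'17 nonadj'18 nonadj'19 ab'])
qed

lemma nonrep_W4:
  assumes fin: "finE K" and w4: "W4 K"
  shows "\<not> representable (line_graph K)"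
proof
  assume "representable (line_graph K)"
  then obtain W where sW: "set W = fst (line_graph K)" and
    rep: "\<And>x y. x \<in> fst (line_graph K) \<Longrightarrow> y \<in> fst (line_graph K) \<Longrightarrow> x \<noteq> y \<Longrightarrow>
       alternate W x y \<longleftrightarrow> {x, y} \<in> snd (line_graph K)"
    unfolding representable_def by blast
  obtain h r1 r2 r3 r4 where di: "distinct [h, r1, r2, r3, r4]" and
    ek: "{h, r1} \<in> snd K" "{h, r2} \<in> snd K" "{h, r3} \<in> snd K" "{h, r4} \<in> snd K"
     "{r1, r2} \<in> snd K" "{r2, r3} \<in> snd K" "{r3, r4} \<in> snd K" "{r4, r1} \<in> snd K"
    using w4 unfolding W4_def by blast
  define R where "R = (\<lambda>x y. lead W x y \<and> x \<in> set W \<and> y \<in> set W)"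
  have tri: "False" if "x \<noteq> z" "R x y" "R y z" "R z x" for x y z
    by (rule lead_tri[where x=x and z=z and W=W and y=y]) (use that in \<open>auto simp: R_def\<close>)
  have sc: "R x z \<and> R y w" if "R x y" "R y z" "R z w" "R x w" for x y z w
  proof -
    have "lead W x z \<and> lead W y w" by (rule lead_sc) (use that in \<open>simp_all add: R_def\<close>)
    then show ?thesis using that unfolding R_def by blast
  qed
  have anti: "False" if "x \<noteq> y" "R x y" "R y x" for x y
    by (rule lead_anti[where x=x and y=y and W=W]) (use that in \<open>auto simp: R_def\<close>)
  have edge_R: "R (NN e) (NN f) \<or> R (NN f) (NN e)"
    if "e \<in> snd K" "f \<in> snd K" "e \<noteq> f" "e \<inter> f \<noteq> {}" for e f
  proof -
    have fe: "finite e" "finite f" using fin that(1,2) unfolding finE_def by auto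
    have v: "NN e \<in> fst (line_graph K)" "NN f \<in> fst (line_graph K)" by (rule line_vert[OF that(1)], rule line_vert[OF that(2)])
    then have m: "NN e \<in> set W" "NN f \<in> set W" unfolding sW by auto
    have ne: "NN e \<noteq> NN f" using fe that(3) by simp
    have "{NN e, NN f} \<in> snd (line_graph K)" by (rule line_edge[OF that])
    then have "alternate W (NN e) (NN f)" using rep[OF v ne] by simp
    then have "lead W (NN e) (NN f) \<or> lead W (NN f) (NN e)" by (rule alt_lead[OF _ ne])
    then show ?thesis unfolding R_def using m by auto
  qed
  have nonedge_R: "\<not> R (NN e) (NN f)"
    if "e \<in> snd K" "f \<in> snd K" "e \<noteq> f" "e \<inter> f = {}" for e f
  proof
    assume "R (NN e) (NN f)"
    then have l: "lead W (NN e) (NN f)" and m: "NN e \<in> set W" "NN f \<in> set W" unfolding R_def by auto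
    have fe: "finite e" "finite f" using fin that(1,2) unfolding finE_def by auto
    have v: "NN e \<in> fst (line_graph K)" "NN f \<in> fst (line_graph K)" by (rule line_vert[OF that(1)], rule line_vert[OF that(2)])
    have ne: "NN e \<noteq> NN f" using fe that(3) by simp
    have "alternate W (NN e) (NN f)" by (rule lead_alt[OF l ne m])
    then have "{NN e, NN f} \<in> snd (line_graph K)" using rep[OF v ne] by simp
    then show False using line_nonedge[OF fin that(1,2,4)] by simp
  qed
  have dist: "distinct [NN {h, r1}, NN {h, r2}, NN {h, r3}, NN {h, r4}, NN {r1, r2}, NN {r2, r3}, NN {r3, r4}, NN {r4, r1}]" using di by (auto simp: doubleton_eq_iff)
  have e0: "R (NN {h, r1}) (NN {h, r2}) \<or> R (NN {h, r2}) (NN {h, r1})"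
    by (rule edge_R) (use ek di in \<open>auto simp: doubleton_eq_iff\<close>)
  have e1: "R (NN {h, r1}) (NN {h, r3}) \<or> R (NN {h, r3}) (NN {h, r1})"
    by (rule edge_R) (use ek di in \<open>auto simp: doubleton_eq_iff\<close>)
  have e2: "R (NN {h, r1}) (NN {h, r4}) \<or> R (NN {h, r4}) (NN {h, r1})"
    by (rule edge_R) (use ek di in \<open>auto simp: doubleton_eq_iff\<close>)
  have e3: "R (NN {h, r2}) (NN {h, r3}) \<or> R (NN {h, r3}) (NN {h, r2})"
    by (rule edge_R) (use ek di in \<open>auto simp: doubleton_eq_iff\<close>)
  have e4: "R (NN {h, r2}) (NN {h, r4}) \<or> R (NN {h, r4}) (NN {h, r2})"
    by (rule edge_R) (use ek di in \<open>auto simp: doubleton_eq_iff\<close>)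
  have e5: "R (NN {h, r3}) (NN {h, r4}) \<or> R (NN {h, r4}) (NN {h, r3})"
    by (rule edge_R) (use ek di in \<open>auto simp: doubleton_eq_iff\<close>)
  have e6: "R (NN {h, r1}) (NN {r1, r2}) \<or> R (NN {r1, r2}) (NN {h, r1})"
    by (rule edge_R) (use ek di in \<open>auto simp: doubleton_eq_iff\<close>)
  have e7: "R (NN {h, r1}) (NN {r4, r1}) \<or> R (NN {r4, r1}) (NN {h, r1})"
    by (rule edge_R) (use ek di in \<open>auto simp: doubleton_eq_iff\<close>)
  have e8: "R (NN {h, r2}) (NN {r1, r2}) \<or> R (NN {r1, r2}) (NN {h, r2})"
    by (rule edge_R) (use ek di in \<open>auto simp: doubleton_eq_iff\<close>)
  have e9: "R (NN {h, r2}) (NN {r2, r3}) \<or> R (NN {r2, r3}) (NN {h, r2})"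
    by (rule edge_R) (use ek di in \<open>auto simp: doubleton_eq_iff\<close>)
  have e10: "R (NN {h, r3}) (NN {r2, r3}) \<or> R (NN {r2, r3}) (NN {h, r3})"
    by (rule edge_R) (use ek di in \<open>auto simp: doubleton_eq_iff\<close>)
  have e11: "R (NN {h, r3}) (NN {r3, r4}) \<or> R (NN {r3, r4}) (NN {h, r3})"
    by (rule edge_R) (use ek di in \<open>auto simp: doubleton_eq_iff\<close>)
  have e12: "R (NN {h, r4}) (NN {r3, r4}) \<or> R (NN {r3, r4}) (NN {h, r4})"
    by (rule edge_R) (use ek di in \<open>auto simp: doubleton_eq_iff\<close>)
  have e13: "R (NN {h, r4}) (NN {r4, r1}) \<or> R (NN {r4, r1}) (NN {h, r4})"
    by (rule edge_R) (use ek di in \<open>auto simp: doubleton_eq_iff\<close>)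
  have e14: "R (NN {r1, r2}) (NN {r2, r3}) \<or> R (NN {r2, r3}) (NN {r1, r2})"
    by (rule edge_R) (use ek di in \<open>auto simp: doubleton_eq_iff\<close>)
  have e15: "R (NN {r2, r3}) (NN {r3, r4}) \<or> R (NN {r3, r4}) (NN {r2, r3})"
    by (rule edge_R) (use ek di in \<open>auto simp: doubleton_eq_iff\<close>)
  have e16: "R (NN {r3, r4}) (NN {r4, r1}) \<or> R (NN {r4, r1}) (NN {r3, r4})"
    by (rule edge_R) (use ek di in \<open>auto simp: doubleton_eq_iff\<close>)
  have e17: "R (NN {r4, r1}) (NN {r1, r2}) \<or> R (NN {r1, r2}) (NN {r4, r1})"
    by (rule edge_R) (use ek di in \<open>auto simp: doubleton_eq_iff\<close>)
  have n0: "\<not> R (NN {h, r1}) (NN {r2, r3})"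
    by (rule nonedge_R) (use ek di in \<open>auto simp: doubleton_eq_iff\<close>)
  have n1: "\<not> R (NN {h, r1}) (NN {r3, r4})"
    by (rule nonedge_R) (use ek di in \<open>auto simp: doubleton_eq_iff\<close>)
  have n2: "\<not> R (NN {h, r2}) (NN {r3, r4})"
    by (rule nonedge_R) (use ek di in \<open>auto simp: doubleton_eq_iff\<close>)
  have n3: "\<not> R (NN {h, r2}) (NN {r4, r1})"
    by (rule nonedge_R) (use ek di in \<open>auto simp: doubleton_eq_iff\<close>)
  have n4: "\<not> R (NN {h, r3}) (NN {r1, r2})"
    by (rule nonedge_R) (use ek di in \<open>auto simp: doubleton_eq_iff\<close>)
  have n5: "\<not> R (NN {h, r3}) (NN {r4, r1})"
    by (rule nonedge_R) (use ek di in \<open>auto simp: doubleton_eq_iff\<close>)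
  have n6: "\<not> R (NN {h, r4}) (NN {r1, r2})"
    by (rule nonedge_R) (use ek di in \<open>auto simp: doubleton_eq_iff\<close>)
  have n7: "\<not> R (NN {h, r4}) (NN {r2, r3})"
    by (rule nonedge_R) (use ek di in \<open>auto simp: doubleton_eq_iff\<close>)
  have n8: "\<not> R (NN {r1, r2}) (NN {h, r3})"
    by (rule nonedge_R) (use ek di in \<open>auto simp: doubleton_eq_iff\<close>)
  have n9: "\<not> R (NN {r1, r2}) (NN {h, r4})"
    by (rule nonedge_R) (use ek di in \<open>auto simp: doubleton_eq_iff\<close>)
  have n10: "\<not> R (NN {r1, r2}) (NN {r3, r4})"
    by (rule nonedge_R) (use ek di in \<open>auto simp: doubleton_eq_iff\<close>)
  have n11: "\<not> R (NN {r2, r3}) (NN {h, r1})"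
    by (rule nonedge_R) (use ek di in \<open>auto simp: doubleton_eq_iff\<close>)
  have n12: "\<not> R (NN {r2, r3}) (NN {h, r4})"
    by (rule nonedge_R) (use ek di in \<open>auto simp: doubleton_eq_iff\<close>)
  have n13: "\<not> R (NN {r2, r3}) (NN {r4, r1})"
    by (rule nonedge_R) (use ek di in \<open>auto simp: doubleton_eq_iff\<close>)
  have n14: "\<not> R (NN {r3, r4}) (NN {h, r1})"
    by (rule nonedge_R) (use ek di in \<open>auto simp: doubleton_eq_iff\<close>)
  have n15: "\<not> R (NN {r3, r4}) (NN {h, r2})"
    by (rule nonedge_R) (use ek di in \<open>auto simp: doubleton_eq_iff\<close>)
  have n16: "\<not> R (NN {r3, r4}) (NN {r1, r2})"
    by (rule nonedge_R) (use ek di in \<open>auto simp: doubleton_eq_iff\<close>)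
  have n17: "\<not> R (NN {r4, r1}) (NN {h, r2})"
    by (rule nonedge_R) (use ek di in \<open>auto simp: doubleton_eq_iff\<close>)
  have n18: "\<not> R (NN {r4, r1}) (NN {h, r3})"
    by (rule nonedge_R) (use ek di in \<open>auto simp: doubleton_eq_iff\<close>)
  have n19: "\<not> R (NN {r4, r1}) (NN {r2, r3})"
    by (rule nonedge_R) (use ek di in \<open>auto simp: doubleton_eq_iff\<close>)
  show False by (rule LW4_wrap[OF tri sc anti dist e0 e1 e2 e3 e4 e5 e6 e7 e8 e9 e10 e11 e12 e13 e14 e15 e16 e17 n0 n1 n2 n3 n4 n5 n6 n7 n8 n9 n10 n11 n12 n13 n14 n15 n16 n17 n18 n19])
qed

lemma embed_edge: "{x, y} \<in> snd G \<Longrightarrow> {Leaf x, Leaf y} \<in> snd (embed_graph G)"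
  unfolding embed_graph_def by simp (rule image_eqI[where x="{x, y}"], auto)

lemma Star4_embed: "Star4 G \<Longrightarrow> Star4 (embed_graph G)"
proof -
  assume "Star4 G"
  then obtain c a b d e where di: "distinct [c, a, b, d, e]" and
    ed: "{c, a} \<in> snd G" "{c, b} \<in> snd G" "{c, d} \<in> snd G" "{c, e} \<in> snd G"
    unfolding Star4_def by blast
  show ?thesis unfolding Star4_def
    by (rule exI[of _ "Leaf c"], rule exI[of _ "Leaf a"], rule exI[of _ "Leaf b"], rule exI[of _ "Leaf d"],
        rule exI[of _ "Leaf e"]) (use di embed_edge[OF ed(1)] embed_edge[OF ed(2)] embed_edge[OF ed(3)] embed_edge[OF ed(4)] in simp)
qed

lemma Paw_embed: "Paw G \<Longrightarrow> Paw (embed_graph G)"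
proof -
  assume "Paw G"
  then obtain x y z w where di: "distinct [x, y, z, w]" and
    ed: "{x, y} \<in> snd G" "{x, z} \<in> snd G" "{y, z} \<in> snd G" "{x, w} \<in> snd G"
    unfolding Paw_def by blast
  show ?thesis unfolding Paw_def
    by (rule exI[of _ "Leaf x"], rule exI[of _ "Leaf y"], rule exI[of _ "Leaf z"], rule exI[of _ "Leaf w"])
      (use di embed_edge[OF ed(1)] embed_edge[OF ed(2)] embed_edge[OF ed(3)] embed_edge[OF ed(4)] in simp)
qed

lemma Fork_embed: "Fork G \<Longrightarrow> Fork (embed_graph G)"
proof -
  assume "Fork G"
  then obtain c a b d e where di: "distinct [c, a, b, d, e]" and
    ed: "{c, a} \<in> snd G" "{c, b} \<in> snd G" "{c, d} \<in> snd G" "{a, e} \<in> snd G"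
    unfolding Fork_def by blast
  show ?thesis unfolding Fork_def
    by (rule exI[of _ "Leaf c"], rule exI[of _ "Leaf a"], rule exI[of _ "Leaf b"], rule exI[of _ "Leaf d"],
        rule exI[of _ "Leaf e"]) (use di embed_edge[OF ed(1)] embed_edge[OF ed(2)] embed_edge[OF ed(3)] embed_edge[OF ed(4)] in simp)
qed

lemma classify:
  assumes sg: "simple_graph G" and cg: "connected_graph G" and np: "\<not> is_path_graph G"
    and nc: "\<not> is_cycle_graph G" and ncl: "\<not> is_claw G"
  shows "Star4 G \<or> Paw G \<or> Fork G"
proof -
  have "\<exists>c a b d. distinct [c, a, b, d] \<and> {c, a} \<in> snd G \<and> {c, b} \<in> snd G \<and> {c, d} \<in> snd G"
  proof (rule ccontr)
    assume no: "\<not> ?thesis"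
    have "\<not> distinct [v, a, b, d]" if "{v, a} \<in> snd G" "{v, b} \<in> snd G" "{v, d} \<in> snd G" for v a b d
      using no that by blast
    then have "is_path_graph G \<or> is_cycle_graph G" using deg2_path_or_cycle[OF sg cg] by blast
    then show False using np nc by blast
  qed
  then obtain c a b d where di: "distinct [c, a, b, d]" and
    ca: "{c, a} \<in> snd G" and cb: "{c, b} \<in> snd G" and cd: "{c, d} \<in> snd G" by blast
  show ?thesis
  proof (rule ccontr)
    assume nn: "\<not> (Star4 G \<or> Paw G \<or> Fork G)"
    let ?S = "{c, a, b, d}"
    have noc: "e \<in> ?S" if ce: "{c, e} \<in> snd G" for e
    proof (rule ccontr)
      assume "e \<notin> ?S"
      then have "distinct [c, a, b, d, e]" using di by auto
      then have "Star4 G" unfolding Star4_def using ca cb cd ce by blast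
      then show False using nn by blast
    qed
    have nol: "e \<in> ?S" if xe: "{x, e} \<in> snd G" and x: "x \<in> {a, b, d}" for x e
    proof (rule ccontr)
      assume en: "e \<notin> ?S"
      have "Fork G"
      proof -
        consider "x = a" | "x = b" | "x = d" using x by blast
        then show ?thesis
        proof cases
          case 1
          then have "distinct [c, a, b, d, e]" "{a, e} \<in> snd G" using di en xe by auto
          then show ?thesis unfolding Fork_def using ca cb cd by blast
        next
          case 2
          then have "distinct [c, b, a, d, e]" "{b, e} \<in> snd G" using di en xe by auto
          then show ?thesis unfolding Fork_def using ca cb cd by blast
        next
          case 3
          then have "distinct [c, d, a, b, e]" "{d, e} \<in> snd G" using di en xe by auto
          then show ?thesis unfolding Fork_def using ca cb cd by blast
        qed
      qed
      then show False using nn by blast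
    qed
    have nab: "{a, b} \<notin> snd G"
    proof
      assume "{a, b} \<in> snd G"
      then have "Paw G" unfolding Paw_def using di ca cb cd by (intro exI[of _ c] exI[of _ a] exI[of _ b] exI[of _ d]) auto
      then show False using nn by blast
    qed
    have nad: "{a, d} \<notin> snd G"
    proof
      assume "{a, d} \<in> snd G"
      then have "Paw G" unfolding Paw_def using di ca cb cd by (intro exI[of _ c] exI[of _ a] exI[of _ d] exI[of _ b]) auto
      then show False using nn by blast
    qed
    have nbd: "{b, d} \<notin> snd G"
    proof
      assume "{b, d} \<in> snd G"
      then have "Paw G" unfolding Paw_def using di ca cb cd by (intro exI[of _ c] exI[of _ b] exI[of _ d] exI[of _ a]) auto
      then show False using nn by blast
    qed
    have cV: "c \<in> fst G" using simple_edge[OF sg ca] by blast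
    have VS: "fst G = ?S"
    proof
      show "?S \<subseteq> fst G" using simple_edge[OF sg ca] simple_edge[OF sg cb] simple_edge[OF sg cd] by blast
      show "fst G \<subseteq> ?S"
      proof
        fix v assume v: "v \<in> fst G"
        show "v \<in> ?S"
        proof (rule ccontr)
          assume vn: "v \<notin> ?S"
          have "reach G c v" using cg cV v unfolding connected_graph_def by blast
          then obtain u z where u: "u \<in> ?S" and z: "z \<notin> ?S" and uz: "{u, z} \<in> snd G"
            using exit_edge[of G c v ?S] vn by auto
          show False
          proof (cases "u = c")
            case True
            then have "{c, z} \<in> snd G" using uz by simp
            then show False using noc z by blast
          next
            case False
            then have "u \<in> {a, b, d}" using u by blast
            then show False using nol[OF uz] z by blast
          qed
        qed
      qed
    qed
    have ES: "snd G = {{c, a}, {c, b}, {c, d}}"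
    proof
      show "{{c, a}, {c, b}, {c, d}} \<subseteq> snd G" using ca cb cd by blast
      show "snd G \<subseteq> {{c, a}, {c, b}, {c, d}}"
      proof
        fix e assume e: "e \<in> snd G"
        obtain x y where xy: "x \<in> fst G" "y \<in> fst G" "x \<noteq> y" "e = {x, y}"
          using sg e unfolding simple_graph_def by auto
        have exy: "{x, y} \<in> snd G" using e xy(4) by simp
        have "x \<in> ?S" "y \<in> ?S" using xy(1,2) VS by simp_all
        then show "e \<in> {{c, a}, {c, b}, {c, d}}"
          using xy(3,4) exy nab nad nbd by (auto simp: insert_commute)
      qed
    qed
    have "is_claw G" unfolding is_claw_def
      by (intro exI[of _ c] exI[of _ a] exI[of _ b] exI[of _ d]) (use di VS ES in simp)
    then show False using ncl by blast
  qed
qed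

theorem theorem4:
  fixes G :: "'a graph" and n :: nat
  assumes "simple_graph G"
    and "connected_graph G"
    and "\<not> is_path_graph G"
    and "\<not> is_cycle_graph G"
    and "\<not> is_claw G"
    and "n \<ge> 4"
  shows "\<not> representable (iter_line_graph n G)"
proof -
  have iS: "iter_line_graph (Suc m) G = line_graph (iter_line_graph m G)" for m
    by (simp add: iter_line_graph_def)
  have i0: "iter_line_graph 0 G = embed_graph G" by (simp add: iter_line_graph_def)
  have cl: "Star4 G \<or> Paw G \<or> Fork G" by (rule classify[OF assms(1-5)])
  have W3: "W4 (iter_line_graph (Suc (Suc (Suc 0))) G)"
  proof -
    { assume "Star4 G"
      then have "Star4 (iter_line_graph 0 G)" using Star4_embed i0 by simp
      then have "K4 (iter_line_graph (Suc 0) G)" unfolding iS by (rule Star4_line_K4)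
      then have "W4 (iter_line_graph (Suc (Suc 0)) G)" unfolding iS[of "Suc 0"] by (rule K4_line_W4)
      then have ?thesis unfolding iS[of "Suc (Suc 0)"] by (rule W4_line_W4) }
    moreover
    { assume "Paw G"
      then have "Paw (iter_line_graph 0 G)" using Paw_embed i0 by simp
      then have "Diamond (iter_line_graph (Suc 0) G)" unfolding iS by (rule Paw_line_Diamond)
      then have "W4 (iter_line_graph (Suc (Suc 0)) G)" unfolding iS[of "Suc 0"] by (rule Diamond_line_W4)
      then have ?thesis unfolding iS[of "Suc (Suc 0)"] by (rule W4_line_W4) }
    moreover
    { assume "Fork G"
      then have "Fork (iter_line_graph 0 G)" using Fork_embed i0 by simp
      then have "Paw (iter_line_graph (Suc 0) G)" unfolding iS by (rule Fork_line_Paw)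
      then have "Diamond (iter_line_graph (Suc (Suc 0)) G)" unfolding iS[of "Suc 0"] by (rule Paw_line_Diamond)
      then have ?thesis unfolding iS[of "Suc (Suc 0)"] by (rule Diamond_line_W4) }
    ultimately show ?thesis using cl by blast
  qed
  have Wj: "W4 (iter_line_graph (Suc (Suc (Suc j))) G)" for j
  proof (induction j)
    case 0 then show ?case by (rule W3)
  next
    case (Suc j)
    have "W4 (line_graph (iter_line_graph (Suc (Suc (Suc j))) G))" by (rule W4_line_W4[OF Suc.IH])
    then show ?case by (simp only: iS)
  qed
  have Wm: "W4 (iter_line_graph m G)" if "Suc (Suc (Suc 0)) \<le> m" for m
  proof -
    have e: "Suc (Suc (Suc (m - 3))) = m" using that by simp
    show ?thesis using Wj[of "m - 3"] unfolding e .
  qed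
  obtain m where nm: "n = Suc m" using assms(6) by (cases n) auto
  have m3: "Suc (Suc (Suc 0)) \<le> m" using assms(6) nm by simp
  then obtain m' where mm: "m = Suc m'" by (cases m) auto
  have fm: "finE (iter_line_graph m G)" unfolding mm iS by (rule finE_line)
  show ?thesis unfolding nm iS by (rule nonrep_W4[OF fm Wm[OF m3]])
qed

end
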